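(* Let $G=(V,E)$ be a connected hypergraph and $\lambda\in\mathbb{C}$. Then $\prod_{A\in E}f_A^{(\lambda)}=f_V^{(\lambda)}$ if $G$ is a hypertree and $=0$ if $G$ is not a hypertree. More generally, for complex numbers $\{\lambda_A\}_{A\in E}$, $\prod_{A\in E}f_A^{(\lambda_A)}=f_V^{(\lambda_\star)}$ if $G$ is a hypertree and $=0$ otherwise, where $$\lambda_\star=\frac{\sum_{A\in E}(|A|-1)\lambda_A}{\sum_{A\in E}(|A|-1)}=\frac{\sum_{A\in E}(|A|-1)\lambda_A}{\big|\bigcup_{A\in E}A\big|-1}.$$
   Context: A hypergraph is a pair $G=(V,E)$ with $V$ finite and $E$ a set of subsets of $V$ each of cardinality at least 2. A walk is $(v_0,e_1,v_1,\ldots,e_k,v_k)$ with $v_{i-1},v_i\in e_i\in E$; $G$ is connected if any two vertices are joined by a walk. A cycle is a walk with $v_0,\ldots,v_{k-1}$ distinct, $v_k=v_0$, $e_1,\ldots,e_k$ distinct, $k\ge2$; a hypertree is a connected hypergraph without cycles. For each $i\in V$ let $\psi_i,\bar\psi_i$ be anticommuting generators of a Grassmann algebra over $\mathbb{C}$; $\tau_A=\prod_{i\in A}\bar\psi_i\psi_i$ ($\tau_\emptyset=1$); $f_A^{(\lambda)}=\lambda(1-|A|)\tau_A+\sum_{i\in A}\tau_{A\setminus\{i\}}-\sum_{i,j\in A,\ i\neq j}\bar\psi_i\psi_j\,\tau_{A\setminus\{i,j\}}$ (the factors commute, being even). *)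

theory Defs
  imports Complex_Main "HOL-Library.Product_Lexorder"
begin

definition hypergraph :: "'v set \<Rightarrow> 'v set set \<Rightarrow> bool" where
  "hypergraph V E \<longleftrightarrow> finite V \<and> (\<forall>A\<in>E. A \<subseteq> V \<and> 2 \<le> card A)"

text \<open>A walk (v_0,e_1,v_1,...,e_k,v_k) is given by the vertex list vs = [v_0,...,v_k]
  and the edge list es = [e_1,...,e_k].\<close>
definition hg_walk :: "'v set set \<Rightarrow> 'v list \<Rightarrow> 'v set list \<Rightarrow> bool" where
  "hg_walk E vs es \<longleftrightarrow> length vs = length es + 1 \<and>
     (\<forall>i < length es. es ! i \<in> E \<and> vs ! i \<in> es ! i \<and> vs ! (Suc i) \<in> es ! i)"

definition hg_connected :: "'v set \<Rightarrow> 'v set set \<Rightarrow> bool" where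
  "hg_connected V E \<longleftrightarrow> (\<forall>u\<in>V. \<forall>v\<in>V. \<exists>vs es. hg_walk E vs es \<and> hd vs = u \<and> last vs = v)"

definition hg_cycle :: "'v set set \<Rightarrow> 'v list \<Rightarrow> 'v set list \<Rightarrow> bool" where
  "hg_cycle E vs es \<longleftrightarrow> hg_walk E vs es \<and> 2 \<le> length es \<and>
     distinct (butlast vs) \<and> last vs = hd vs \<and> distinct es"

definition hypertree :: "'v set \<Rightarrow> 'v set set \<Rightarrow> bool" where
  "hypertree V E \<longleftrightarrow> hg_connected V E \<and> \<not> (\<exists>vs es. hg_cycle E vs es)"

text \<open>Elements of the Grassmann algebra generated by a linearly ordered set of generators
  are coefficient functions on finite sets of generators (monomials = increasing products).
  Generators are ('v \<times> bool): (i, False) is psibar_i and (i, True) is psi_i.\<close>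

type_synonym 'g grass = "'g set \<Rightarrow> complex"

definition inv_count :: "('g::linorder) set \<Rightarrow> 'g set \<Rightarrow> nat" where
  "inv_count T U = card {(t, u). t \<in> T \<and> u \<in> U \<and> u < t}"

definition gmul :: "('g::linorder) grass \<Rightarrow> 'g grass \<Rightarrow> 'g grass" where
  "gmul a b = (\<lambda>S. if finite S then
      (\<Sum>T\<in>Pow S. (-1) ^ inv_count T (S - T) * a T * b (S - T)) else 0)"

definition gone :: "'g grass" where
  "gone = (\<lambda>S. if S = {} then 1 else 0)"

definition gzero :: "'g grass" where
  "gzero = (\<lambda>S. 0)"

definition gadd :: "'g grass \<Rightarrow> 'g grass \<Rightarrow> 'g grass" where
  "gadd a b = (\<lambda>S. a S + b S)"

definition gdiff :: "'g grass \<Rightarrow> 'g grass \<Rightarrow> 'g grass" where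
  "gdiff a b = (\<lambda>S. a S - b S)"

definition gscal :: "complex \<Rightarrow> 'g grass \<Rightarrow> 'g grass" where
  "gscal c a = (\<lambda>S. c * a S)"

definition gsum :: "('i \<Rightarrow> 'g grass) \<Rightarrow> 'i set \<Rightarrow> 'g grass" where
  "gsum F I = (\<lambda>S. \<Sum>i\<in>I. F i S)"

definition ggen :: "'g \<Rightarrow> 'g grass" where
  "ggen g = (\<lambda>S. if S = {g} then 1 else 0)"

definition gprod_list :: "('g::linorder) grass list \<Rightarrow> 'g grass" where
  "gprod_list xs = foldr gmul xs gone"

definition psi :: "'v \<Rightarrow> ('v \<times> bool) grass" where
  "psi i = ggen (i, True)"

definition psibar :: "'v \<Rightarrow> ('v \<times> bool) grass" where
  "psibar i = ggen (i, False)"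

text \<open>tau_A = prod_{i in A} psibar_i psi_i (factors are even, hence commute; we take them
  in increasing order).\<close>
definition tau :: "('v::linorder) set \<Rightarrow> ('v \<times> bool) grass" where
  "tau A = gprod_list (map (\<lambda>i. gmul (psibar i) (psi i)) (sorted_list_of_set A))"

definition fA :: "complex \<Rightarrow> ('v::linorder) set \<Rightarrow> ('v \<times> bool) grass" where
  "fA lam A = gdiff
     (gadd (gscal (lam * (1 - of_nat (card A))) (tau A))
           (gsum (\<lambda>i. tau (A - {i})) A))
     (gsum (\<lambda>(i, j). gmul (gmul (psibar i) (psi j)) (tau (A - {i, j})))
           {(i, j). i \<in> A \<and> j \<in> A \<and> i \<noteq> j})"

definition lambda_star :: "'v set set \<Rightarrow> ('v set \<Rightarrow> complex) \<Rightarrow> complex" where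
  "lambda_star E lamA = (\<Sum>A\<in>E. (of_nat (card A) - 1) * lamA A) / (\<Sum>A\<in>E. of_nat (card A) - 1)"

end

theory Submission
  imports Defs
begin

lemma inv_count_Un_left:
  assumes "finite T" "finite T'" "finite U" "T \<inter> T' = {}"
  shows "inv_count (T \<union> T') U = inv_count T U + inv_count T' U"
proof -
  have "{(t, u). t \<in> T \<union> T' \<and> u \<in> U \<and> u < t} =
        {(t, u). t \<in> T \<and> u \<in> U \<and> u < t} \<union> {(t, u). t \<in> T' \<and> u \<in> U \<and> u < t}" by auto
  moreover have "finite {(t, u). t \<in> T \<and> u \<in> U \<and> u < t}"
    by (rule finite_subset[of _ "T \<times> U"]) (use assms in auto)
  moreover have "finite {(t, u). t \<in> T' \<and> u \<in> U \<and> u < t}"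
    by (rule finite_subset[of _ "T' \<times> U"]) (use assms in auto)
  ultimately show ?thesis unfolding inv_count_def
    by (subst card_Un_disjoint[symmetric]) (use assms in auto)
qed

lemma inv_count_Un_right:
  assumes "finite T" "finite U" "finite U'" "U \<inter> U' = {}"
  shows "inv_count T (U \<union> U') = inv_count T U + inv_count T U'"
proof -
  have "{(t, u). t \<in> T \<and> u \<in> U \<union> U' \<and> u < t} =
        {(t, u). t \<in> T \<and> u \<in> U \<and> u < t} \<union> {(t, u). t \<in> T \<and> u \<in> U' \<and> u < t}" by auto
  moreover have "finite {(t, u). t \<in> T \<and> u \<in> U \<and> u < t}"
    by (rule finite_subset[of _ "T \<times> U"]) (use assms in auto)
  moreover have "finite {(t, u). t \<in> T \<and> u \<in> U' \<and> u < t}"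
    by (rule finite_subset[of _ "T \<times> U'"]) (use assms in auto)
  ultimately show ?thesis unfolding inv_count_def
    by (subst card_Un_disjoint[symmetric]) (use assms in auto)
qed

lemma inv_count_swap:
  fixes T U :: "'g::linorder set"
  assumes "finite T" "finite U" "T \<inter> U = {}"
  shows "inv_count T U + inv_count U T = card T * card U"
proof -
  let ?X = "{(t, u). t \<in> T \<and> u \<in> U \<and> u < t}"
  let ?Y = "{(t, u). t \<in> T \<and> u \<in> U \<and> t < u}"
  have fX: "finite ?X" by (rule finite_subset[of _ "T \<times> U"]) (use assms in auto)
  have fY: "finite ?Y" by (rule finite_subset[of _ "T \<times> U"]) (use assms in auto)
  have e: "{(u, t). u \<in> U \<and> t \<in> T \<and> t < u} = prod.swap ` ?Y"
    by (auto simp: image_iff)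
  have "inv_count U T = card ?Y"
    unfolding inv_count_def e by (rule card_image) (simp add: inj_on_def)
  moreover have "?X \<union> ?Y = T \<times> U"
    proof (intro equalityI subsetI)
    fix p assume "p \<in> T \<times> U"
    then obtain t u where p: "p = (t,u)" "t \<in> T" "u \<in> U" by auto
    with assms have "t \<noteq> u" by auto
    then have "u < t \<or> t < u" by auto
    with p show "p \<in> ?X \<union> ?Y" by auto
  qed auto
  moreover have "?X \<inter> ?Y = {}" by auto
  ultimately have "card ?X + card ?Y = card T * card U"
    using card_Un_disjoint[OF fX fY] by (simp add: card_cartesian_product)
  then show ?thesis using \<open>inv_count U T = card ?Y\<close> unfolding inv_count_def by simp
qed

lemma sum_Pow_swap:
  assumes "finite S"
  shows "(\<Sum>T\<in>Pow S. \<Sum>R\<in>Pow T. F T R) = (\<Sum>R\<in>Pow S. \<Sum>Q\<in>Pow (S - R). F (R \<union> Q) R)"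
proof -
  have fin: "finite (Pow S)" using assms by simp
  have "(\<Sum>T\<in>Pow S. \<Sum>R\<in>Pow T. F T R) = (\<Sum>(T,R)\<in>Sigma (Pow S) Pow. F T R)"
    by (rule sum.Sigma) (use assms in \<open>auto intro: finite_subset\<close>)
  also have "\<dots> = (\<Sum>(R,Q)\<in>Sigma (Pow S) (\<lambda>R. Pow (S - R)). F (R \<union> Q) R)"
    by (rule sum.reindex_bij_witness[where i="\<lambda>(R,Q). (R \<union> Q, R)" and j="\<lambda>(T,R). (R, T - R)"]) (auto simp: Un_absorb1 Un_absorb2)
  also have "\<dots> = (\<Sum>R\<in>Pow S. \<Sum>Q\<in>Pow (S - R). F (R \<union> Q) R)"
    by (rule sum.Sigma[symmetric]) (use assms in auto)
  finally show ?thesis .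
qed

lemma gmul_assoc_fin:
  fixes a b c :: "('g::linorder) grass"
  assumes "finite S"
  shows "gmul (gmul a b) c S = gmul a (gmul b c) S"
proof -
  let ?s = "\<lambda>T U. (-1::complex) ^ inv_count T U"
  have "gmul (gmul a b) c S = (\<Sum>T\<in>Pow S. \<Sum>R\<in>Pow T. ?s T (S - T) * (?s R (T - R) * a R * b (T - R)) * c (S - T))"
    using assms by (simp add: gmul_def sum_distrib_left sum_distrib_right finite_subset)
  also have "\<dots> = (\<Sum>R\<in>Pow S. \<Sum>Q\<in>Pow (S - R). ?s (R \<union> Q) (S - (R \<union> Q)) * (?s R ((R \<union> Q) - R) * a R * b ((R \<union> Q) - R)) * c (S - (R \<union> Q)))"
    by (rule sum_Pow_swap[OF assms])
  also have "\<dots> = (\<Sum>R\<in>Pow S. \<Sum>Q\<in>Pow (S - R). ?s R (S - R) * a R * (?s Q (S - R - Q) * b Q * c (S - R - Q)))"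
  proof (intro sum.cong refl)
    fix R Q assume R: "R \<in> Pow S" and Q: "Q \<in> Pow (S - R)"
    let ?W = "S - R - Q"
    have fR: "finite R" and fQ: "finite Q" and fW: "finite ?W"
      using R Q assms by (auto intro: finite_subset)
    have d1: "(R \<union> Q) - R = Q" using Q by auto
    have d2: "S - (R \<union> Q) = ?W" by auto
    have d3: "S - R = Q \<union> ?W" using Q by auto
    have e1: "inv_count (R \<union> Q) ?W = inv_count R ?W + inv_count Q ?W"
      by (rule inv_count_Un_left) (use fR fQ fW Q in auto)
    have e2: "inv_count R (Q \<union> ?W) = inv_count R Q + inv_count R ?W"
      by (rule inv_count_Un_right) (use fR fQ fW in auto)
    have "?s (R \<union> Q) (S - (R \<union> Q)) * ?s R ((R \<union> Q) - R) = ?s R (S - R) * ?s Q (S - R - Q)"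
      unfolding d1 d2 e1 by (subst d3, subst e2) (simp add: power_add)
    then show "?s (R \<union> Q) (S - (R \<union> Q)) * (?s R ((R \<union> Q) - R) * a R * b ((R \<union> Q) - R)) * c (S - (R \<union> Q))
        = ?s R (S - R) * a R * (?s Q (S - R - Q) * b Q * c (S - R - Q))"
      unfolding d1 d2 by (simp add: algebra_simps)
  qed
  also have "\<dots> = gmul a (gmul b c) S"
    using assms by (simp add: gmul_def sum_distrib_left finite_subset)
  finally show ?thesis .
qed

lemma inv_count_empty[simp]: "inv_count T {} = 0" "inv_count {} U = 0"
  by (simp_all add: inv_count_def)

lemma gmul_one_left_fin:
  assumes "finite S" shows "gmul gone a S = a S"
proof -
  have "gmul gone a S = (\<Sum>T\<in>Pow S. if T = {} then a S else 0)"
    unfolding gmul_def using assms by (simp only: if_True) (intro sum.cong, auto simp: gone_def inv_count_empty)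
  also have "\<dots> = a S" by (subst sum.delta) (use assms in auto)
  finally show ?thesis .
qed

lemma gmul_one_right_fin:
  assumes "finite S" shows "gmul a gone S = a S"
proof -
  have "gmul a gone S = (\<Sum>T\<in>Pow S. if T = S then a S else 0)"
    unfolding gmul_def using assms by (simp only: if_True) (intro sum.cong, auto simp: gone_def inv_count_empty)
  also have "\<dots> = a S" by (subst sum.delta) (use assms in auto)
  finally show ?thesis .
qed

lemma gmul_inf: "infinite S \<Longrightarrow> gmul a b S = 0" by (simp add: gmul_def)

lemma gmul_assoc: "gmul (gmul a b) c = gmul a (gmul b c)"
proof
  fix S show "gmul (gmul a b) c S = gmul a (gmul b c) S"
    by (cases "finite S") (simp_all add: gmul_assoc_fin gmul_inf)
qed

lemma gmul_one_left: "\<forall>S. infinite S \<longrightarrow> a S = 0 \<Longrightarrow> gmul gone a = a"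
proof
  fix S assume "\<forall>S. infinite S \<longrightarrow> a S = 0"
  then show "gmul gone a S = a S"
    by (cases "finite S") (simp_all add: gmul_one_left_fin gmul_inf)
qed

lemma gmul_one_right: "\<forall>S. infinite S \<longrightarrow> a S = 0 \<Longrightarrow> gmul a gone = a"
proof
  fix S assume "\<forall>S. infinite S \<longrightarrow> a S = 0"
  then show "gmul a gone S = a S"
    by (cases "finite S") (simp_all add: gmul_one_right_fin gmul_inf)
qed

typedef 'g ga = "{f :: 'g set \<Rightarrow> complex. \<forall>S. infinite S \<longrightarrow> f S = 0}"
  by (rule exI[of _ "\<lambda>_. 0"]) auto

setup_lifting type_definition_ga


instantiation ga :: (linorder) ring_1
begin
lift_definition zero_ga :: "'a ga" is gzero by (simp add: gzero_def)
lift_definition one_ga :: "'a ga" is gone by (auto simp: gone_def)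
lift_definition plus_ga :: "'a ga \<Rightarrow> 'a ga \<Rightarrow> 'a ga" is gadd by (simp add: gadd_def)
lift_definition minus_ga :: "'a ga \<Rightarrow> 'a ga \<Rightarrow> 'a ga" is gdiff by (simp add: gdiff_def)
lift_definition uminus_ga :: "'a ga \<Rightarrow> 'a ga" is "\<lambda>a S. - a S" by simp
lift_definition times_ga :: "'a ga \<Rightarrow> 'a ga \<Rightarrow> 'a ga" is gmul by (simp add: gmul_def)
instance
proof
  fix a b c :: "'a ga"
  show "a * b * c = a * (b * c)"
    by transfer (rule gmul_assoc)
  show "1 * a = a"
    by transfer (rule gmul_one_left)
  show "a * 1 = a"
    by transfer (rule gmul_one_right)
  show "(a + b) * c = a * c + b * c"
    by transfer (simp add: fun_eq_iff gmul_def gadd_def sum.distrib distrib_left distrib_right)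
  show "a * (b + c) = a * b + a * c"
    by transfer (simp add: fun_eq_iff gmul_def gadd_def sum.distrib distrib_left distrib_right)
  show "a + b + c = a + (b + c)"
    by transfer (simp add: fun_eq_iff gadd_def)
  show "a + b = b + a"
    by transfer (simp add: fun_eq_iff gadd_def)
  show "0 + a = a"
    by transfer (simp add: fun_eq_iff gadd_def gzero_def)
  show "- a + a = 0"
    by transfer (simp add: fun_eq_iff gadd_def gzero_def)
  show "a - b = a + - b"
    by transfer (simp add: fun_eq_iff gadd_def gdiff_def)
  show "(0::'a ga) \<noteq> 1"
    by transfer (simp add: fun_eq_iff gzero_def gone_def)
qed
end


definition par :: "nat \<Rightarrow> ('g set \<Rightarrow> complex) \<Rightarrow> bool" where
  "par p a \<longleftrightarrow> (\<forall>T. finite T \<longrightarrow> card T mod 2 \<noteq> p \<longrightarrow> a T = 0)"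

lemma par_gmul:
  assumes "par p a" "par q b"
  shows "par ((p + q) mod 2) (gmul (a::('g::linorder) grass) b)"
  unfolding par_def
proof (intro allI impI)
  fix S :: "'g set" assume S: "finite S" "card S mod 2 \<noteq> (p + q) mod 2"
  have z: "(-1) ^ inv_count T (S - T) * a T * b (S - T) = 0" if "T \<in> Pow S" for T
  proof -
    have fT: "finite T" "finite (S - T)" using that S by (auto intro: finite_subset)
    have "card S = card T + card (S - T)" using that S
      using card_Diff_subset[of T S] card_mono[of S T] fT by auto
    then have "card T mod 2 \<noteq> p \<or> card (S - T) mod 2 \<noteq> q" using S(2) mod_add_eq[of "card T" 2 "card (S - T)"] by auto
    then show ?thesis using assms fT unfolding par_def by auto
  qed
  have "(\<Sum>T\<in>Pow S. (-1) ^ inv_count T (S - T) * a T * b (S - T)) = 0"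
    by (rule sum.neutral) (use z in blast)
  then show "gmul a b S = 0" unfolding gmul_def using S(1) by simp
qed

lemma gmul_comm_even:
  fixes a b :: "('g::linorder) grass"
  assumes "par 0 a"
  shows "gmul a b = gmul b a"
proof
  fix S :: "'g set"
  show "gmul a b S = gmul b a S"
  proof (cases "finite S")
    case False then show ?thesis by (simp add: gmul_inf)
  next
    case True
    have "gmul b a S = (\<Sum>U\<in>Pow S. (-1) ^ inv_count U (S - U) * b U * a (S - U))"
      using True by (simp add: gmul_def)
    also have "\<dots> = (\<Sum>T\<in>Pow S. (-1) ^ inv_count (S - T) (S - (S - T)) * b (S - T) * a (S - (S - T)))"
      by (rule sum.reindex_bij_witness[where i="\<lambda>T. S - T" and j="\<lambda>T. S - T"]) (auto simp: Diff_Diff_Int Int_absorb1 Int_absorb2)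
    also have "\<dots> = (\<Sum>T\<in>Pow S. (-1) ^ inv_count T (S - T) * a T * b (S - T))"
    proof (intro sum.cong refl)
      fix T assume T: "T \<in> Pow S"
      then have d: "S - (S - T) = T" by auto
      have fT: "finite T" "finite (S - T)" using T True by (auto intro: finite_subset)
      show "(-1) ^ inv_count (S - T) (S - (S - T)) * b (S - T) * a (S - (S - T)) =
            (-1) ^ inv_count T (S - T) * a T * b (S - T)"
      proof (cases "card T mod 2 = 0")
        case False
        then show ?thesis using assms fT unfolding d par_def by auto
      next
        case True
        have "inv_count T (S - T) + inv_count (S - T) T = card T * card (S - T)"
          by (rule inv_count_swap) (use fT in auto)
        then have "even (inv_count T (S - T) + inv_count (S - T) T)" using True by auto
        then have "(-1::complex) ^ inv_count (S - T) T = (-1) ^ inv_count T (S - T)"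
          by (cases "even (inv_count T (S - T))") auto
        then show ?thesis unfolding d by (simp add: algebra_simps)
      qed
    qed
    also have "\<dots> = gmul a b S" using True by (simp add: gmul_def)
    finally show ?thesis by simp
  qed
qed

lemma par_gone: "par 0 gone" by (simp add: par_def gone_def)
lemma par_gzero: "par p gzero" by (simp add: par_def gzero_def)
lemma par_gadd: "par p a \<Longrightarrow> par p b \<Longrightarrow> par p (gadd a b)" by (simp add: par_def gadd_def)
lemma par_gdiff: "par p a \<Longrightarrow> par p b \<Longrightarrow> par p (gdiff a b)" by (simp add: par_def gdiff_def)
lemma par_uminus: "par p a \<Longrightarrow> par p (\<lambda>S. - a S)" by (simp add: par_def)
lemma par_ggen: "par 1 (ggen g)" by (simp add: par_def ggen_def)

typedef ('g::linorder) eva = "{x :: 'g ga. par 0 (Rep_ga x)}"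
  by (rule exI[of _ 0]) (simp add: zero_ga.rep_eq par_gzero)

setup_lifting type_definition_eva

instantiation eva :: (linorder) comm_ring_1
begin
lift_definition zero_eva :: "'a eva" is 0 by (simp add: zero_ga.rep_eq par_gzero)
lift_definition one_eva :: "'a eva" is 1 by (simp add: one_ga.rep_eq par_gone)
lift_definition plus_eva :: "'a eva \<Rightarrow> 'a eva \<Rightarrow> 'a eva" is "(+)" by (simp add: plus_ga.rep_eq par_gadd)
lift_definition minus_eva :: "'a eva \<Rightarrow> 'a eva \<Rightarrow> 'a eva" is "(-)" by (simp add: minus_ga.rep_eq par_gdiff)
lift_definition uminus_eva :: "'a eva \<Rightarrow> 'a eva" is "uminus" by (simp add: uminus_ga.rep_eq par_uminus)
lift_definition times_eva :: "'a eva \<Rightarrow> 'a eva \<Rightarrow> 'a eva" is "(*)"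
  using par_gmul[of 0 _ 0] by (simp add: times_ga.rep_eq)
instance
proof
  fix a b c :: "'a eva"
  show "a * b * c = a * (b * c)" by transfer (rule mult.assoc)
  show "a * b = b * a" by transfer (simp add: times_ga.rep_eq gmul_comm_even Rep_ga_inject[symmetric])
  show "1 * a = a" by transfer simp
  show "(a + b) * c = a * c + b * c" by transfer (rule distrib_right)
  show "a + b + c = a + (b + c)" by transfer (rule add.assoc)
  show "a + b = b + a" by transfer (rule add.commute)
  show "0 + a = a" by transfer simp
  show "- a + a = 0" by transfer simp
  show "a - b = a + - b" by transfer simp
  show "(0::'a eva) \<noteq> 1" by transfer simp
qed
end


lemma inv_count_single: "inv_count {a} {b} = (if b < a then 1 else 0)"
proof -
  have "{(t, u). t \<in> {a} \<and> u \<in> {b} \<and> u < t} = (if b < a then {(a, b)} else {})" by auto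
  then show ?thesis unfolding inv_count_def by simp
qed

lemma ggen_mul_fin:
  fixes a b :: "'g::linorder"
  assumes "finite S"
  shows "gmul (ggen a) (ggen b) S = (if a \<noteq> b \<and> S = {a, b} then (if b < a then -1 else 1) else 0)"
proof -
  have "gmul (ggen a) (ggen b) S = (\<Sum>T\<in>Pow S. (-1) ^ inv_count T (S - T) * ggen a T * ggen b (S - T))"
    using assms by (simp add: gmul_def)
  also have "\<dots> = (\<Sum>T\<in>Pow S. if T = {a} then (-1) ^ inv_count {a} (S - {a}) * (if S - {a} = {b} then 1 else 0) else 0)"
    by (rule sum.cong) (auto simp: ggen_def)
  also have "\<dots> = (if a \<in> S then (-1) ^ inv_count {a} (S - {a}) * (if S - {a} = {b} then 1 else 0) else 0)"
    by (subst sum.delta) (use assms in auto)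
  also have "\<dots> = (if a \<noteq> b \<and> S = {a, b} then (if b < a then -1 else 1) else 0)"
  proof (cases "a \<noteq> b \<and> S = {a, b}")
    case True
    then have "S - {a} = {b}" by auto
    then show ?thesis using True by (simp add: inv_count_single)
  next
    case False
    have "\<not> (a \<in> S \<and> S - {a} = {b})"
    proof
      assume h: "a \<in> S \<and> S - {a} = {b}"
      then have "S = {a, b}" by auto
      moreover have "a \<noteq> b" using h by auto
      ultimately show False using False by simp
    qed
    then show ?thesis using False by auto
  qed
  finally show ?thesis .
qed

lemma ggen_mul: "gmul (ggen a) (ggen b) = (\<lambda>S. if a \<noteq> b \<and> S = {a, b} then (if b < a then -1 else 1) else (0::complex))"
  for a b :: "'g::linorder"
proof
  fix S :: "'g set"
  show "gmul (ggen a) (ggen b) S = (if a \<noteq> b \<and> S = {a, b} then (if b < a then -1 else 1) else 0)"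
    by (cases "finite S") (auto simp: ggen_mul_fin gmul_inf)
qed

lift_definition Gg :: "'g \<Rightarrow> ('g::linorder) ga" is ggen by (auto simp: ggen_def)

lemma Gg_anti: "Gg a * Gg b = - (Gg b * Gg a)"
proof -
  have "gmul (ggen a) (ggen b) = (\<lambda>S. - gmul (ggen b) (ggen a) S)"
    unfolding ggen_mul by (auto simp: fun_eq_iff insert_commute)
  then show ?thesis by transfer simp
qed

lemma Gg_sq: "Gg a * Gg a = 0"
  by transfer (simp add: ggen_mul gzero_def)

lemma Gg_anti2: "Gg a * (Gg b * x) = - (Gg b * (Gg a * x))"
  by (simp add: mult.assoc[symmetric] Gg_anti[of a b])

lemma Gg_sq2: "Gg a * (Gg a * x) = 0"
  by (simp add: mult.assoc[symmetric] Gg_sq)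

definition pbg :: "'v \<Rightarrow> ('v::linorder \<times> bool) ga" where "pbg i = Gg (i, False)"
definition psg :: "'v \<Rightarrow> ('v::linorder \<times> bool) ga" where "psg i = Gg (i, True)"

lemma par_EE: "par 0 (Rep_ga (pbg i * psg j))"
  using par_gmul[OF par_ggen par_ggen] by (simp add: pbg_def psg_def times_ga.rep_eq Gg.rep_eq)

definition EE :: "'v \<Rightarrow> 'v \<Rightarrow> ('v::linorder \<times> bool) eva" where
  "EE i j = Abs_eva (pbg i * psg j)"

lemma EE_rep: "Rep_eva (EE i j) = pbg i * psg j"
  unfolding EE_def using par_EE[of i j] by (simp add: Abs_eva_inverse)

lemma ga_R1: "(pbg i * psg j) * (pbg k * psg l) = - ((pbg i * psg l) * (pbg k * psg j))"
proof -
  have h1: "psg j * (pbg k * psg l) = - (pbg k * (psg j * psg l))"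
    unfolding pbg_def psg_def by (simp add: mult.assoc[symmetric] Gg_anti[of "(j,True)" "(k,False)"])
  have h2: "psg j * psg l = - (psg l * psg j)" unfolding psg_def by (rule Gg_anti)
  have h3: "pbg k * (psg l * psg j) = - (psg l * (pbg k * psg j))"
    unfolding pbg_def psg_def by (simp add: mult.assoc[symmetric] Gg_anti[of "(k,False)" "(l,True)"])
  show ?thesis by (simp add: mult.assoc h1 h2 h3)
qed

lemma ga_R2: "(pbg i * psg j) * (pbg i * psg l) = 0"
proof -
  have h1: "psg j * (pbg i * psg l) = - (pbg i * (psg j * psg l))"
    unfolding pbg_def psg_def by (simp add: mult.assoc[symmetric] Gg_anti[of "(j,True)" "(i,False)"])
  have h2: "pbg i * (pbg i * x) = 0" for x unfolding pbg_def by (rule Gg_sq2)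
  show ?thesis by (simp add: mult.assoc h1 h2)
qed

lemma Gg_aba: "Gg a * (Gg b * Gg a) = 0"
proof -
  have "Gg a * (Gg b * Gg a) = (Gg a * Gg b) * Gg a" by (simp only: mult.assoc)
  also have "\<dots> = - (Gg b * Gg a) * Gg a" by (simp only: Gg_anti[of a b])
  also have "\<dots> = - (Gg b * (Gg a * Gg a))" by (simp only: mult.assoc minus_mult_left)
  also have "\<dots> = 0" by (simp only: Gg_sq mult_zero_right minus_zero)
  finally show ?thesis .
qed

lemma ga_R3: "(pbg i * psg j) * (pbg k * psg j) = 0"
proof -
  have "(pbg i * psg j) * (pbg k * psg j) = pbg i * (psg j * (pbg k * psg j))" by (simp only: mult.assoc)
  also have "psg j * (pbg k * psg j) = 0" unfolding psg_def pbg_def by (rule Gg_aba)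
  finally show ?thesis by simp
qed

lemma R1: "EE i j * EE k l = - (EE i l * EE k j)"
  by (rule Rep_eva_inject[THEN iffD1]) (simp only: times_eva.rep_eq uminus_eva.rep_eq EE_rep, rule ga_R1)
lemma R2: "EE i j * EE i l = 0"
  by (rule Rep_eva_inject[THEN iffD1]) (simp only: times_eva.rep_eq zero_eva.rep_eq EE_rep, rule ga_R2)
lemma R3: "EE i j * EE k j = 0"
  by (rule Rep_eva_inject[THEN iffD1]) (simp only: times_eva.rep_eq zero_eva.rep_eq EE_rep, rule ga_R3)


lemma sum_ins_diff:
  assumes "finite C" "x \<notin> C"
  shows "(\<Sum>i\<in>insert x C. h (insert x C - {i})) = h C + (\<Sum>i\<in>C. h (insert x (C - {i})))"
proof -
  have "(\<Sum>i\<in>insert x C. h (insert x C - {i})) = h (insert x C - {x}) + (\<Sum>i\<in>C. h (insert x C - {i}))"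
    using assms by simp
  also have "insert x C - {x} = C" using assms by auto
  also have "(\<Sum>i\<in>C. h (insert x C - {i})) = (\<Sum>i\<in>C. h (insert x (C - {i})))"
    by (rule sum.cong) (use assms in \<open>auto simp: insert_Diff_if\<close>)
  finally show ?thesis .
qed

lemma sum2_ins:
  fixes g :: "'v \<Rightarrow> 'v \<Rightarrow> 'v set \<Rightarrow> 'r::comm_monoid_add"
  assumes "finite C" "x \<notin> C"
  shows "(\<Sum>i\<in>insert x C. \<Sum>j\<in>insert x C - {i}. g i j (insert x C - {i} - {j})) =
         (\<Sum>j\<in>C. g x j (C - {j})) + (\<Sum>i\<in>C. g i x (C - {i})) +
         (\<Sum>i\<in>C. \<Sum>j\<in>C - {i}. g i j (insert x (C - {i} - {j})))"
proof -
  have "(\<Sum>i\<in>insert x C. \<Sum>j\<in>insert x C - {i}. g i j (insert x C - {i} - {j})) =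
        (\<Sum>j\<in>insert x C - {x}. g x j (insert x C - {x} - {j})) +
        (\<Sum>i\<in>C. \<Sum>j\<in>insert x C - {i}. g i j (insert x C - {i} - {j}))"
    using assms by simp
  also have "(\<Sum>j\<in>insert x C - {x}. g x j (insert x C - {x} - {j})) = (\<Sum>j\<in>C. g x j (C - {j}))"
  proof -
    have "insert x C - {x} = C" using assms by auto
    then show ?thesis by simp
  qed
  also have "(\<Sum>i\<in>C. \<Sum>j\<in>insert x C - {i}. g i j (insert x C - {i} - {j})) =
             (\<Sum>i\<in>C. g i x (C - {i}) + (\<Sum>j\<in>C - {i}. g i j (insert x (C - {i} - {j}))))"
  proof (rule sum.cong[OF refl])
    fix i assume i: "i \<in> C"
    then have ix: "i \<noteq> x" using assms by auto
    have e: "insert x C - {i} = insert x (C - {i})" using ix by auto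
    have "(\<Sum>j\<in>insert x C - {i}. g i j (insert x C - {i} - {j})) =
          (\<Sum>j\<in>insert x (C - {i}). g i j (insert x (C - {i}) - {j}))" unfolding e ..
    also have "\<dots> = g i x (insert x (C - {i}) - {x}) + (\<Sum>j\<in>C - {i}. g i j (insert x (C - {i}) - {j}))"
      using assms by simp
    also have "insert x (C - {i}) - {x} = C - {i}" using assms by auto
    also have "(\<Sum>j\<in>C - {i}. g i j (insert x (C - {i}) - {j})) = (\<Sum>j\<in>C - {i}. g i j (insert x (C - {i} - {j})))"
      by (rule sum.cong) (use assms in \<open>auto simp: insert_Diff_if\<close>)
    finally show "(\<Sum>j\<in>insert x C - {i}. g i j (insert x C - {i} - {j})) =
          g i x (C - {i}) + (\<Sum>j\<in>C - {i}. g i j (insert x (C - {i} - {j})))" .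
  qed
  also have "\<dots> = (\<Sum>i\<in>C. g i x (C - {i})) + (\<Sum>i\<in>C. \<Sum>j\<in>C - {i}. g i j (insert x (C - {i} - {j})))"
    by (rule sum.distrib)
  finally show ?thesis by (simp add: add.assoc)
qed

locale Erules =
  fixes E :: "'v \<Rightarrow> 'v \<Rightarrow> 'r::comm_ring_1"
  assumes R1: "E i j * E k l = - (E i l * E k j)"
    and R2: "E i j * E i l = 0"
    and R3: "E i j * E k j = 0"
begin

definition T :: "'v set \<Rightarrow> 'r" where "T A = (\<Prod>i\<in>A. E i i)"

definition P :: "'v \<Rightarrow> 'v \<Rightarrow> 'r" where "P r j = E j j - E j r - E r j + E r r"

definition f0 :: "'v set \<Rightarrow> 'r" where
  "f0 A = (\<Sum>i\<in>A. T (A - {i})) - (\<Sum>i\<in>A. \<Sum>j\<in>A - {i}. E i j * T (A - {i} - {j}))"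

definition RR :: "'v \<Rightarrow> 'v set \<Rightarrow> 'r" where
  "RR r B = T B + (\<Sum>k\<in>B. E r r * T (B - {k})) - (\<Sum>k\<in>B. (E k r + E r k) * T (B - {k}))
      - (\<Sum>k\<in>B. \<Sum>l\<in>B - {k}. E k l * E r r * T (B - {k} - {l}))"

lemma T_insert: "finite C \<Longrightarrow> a \<notin> C \<Longrightarrow> T (insert a C) = E a a * T C"
  unfolding T_def by simp

lemma EP_rr: "E r r * P r x = E r r * E x x"
  unfolding P_def by (simp add: algebra_simps R2 R3)

lemma EP_k: "(E k r + E r k) * P r x = (E k r + E r k) * E x x + (E k x + E x k) * E r r"
proof -
  have a: "E r k * E x r = - (E r r * E x k)" by (rule R1)
  have b: "E k r * E r x = - (E k x * E r r)" by (rule R1)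
  show ?thesis unfolding P_def
    by (simp add: algebra_simps R2 R3 a b)
qed

lemma f0_RR:
  assumes "finite B" "r \<notin> B"
  shows "f0 (insert r B) = RR r B"
proof -
  have s1: "(\<Sum>i\<in>insert r B. T (insert r B - {i})) = T B + (\<Sum>k\<in>B. E r r * T (B - {k}))"
    using assms by (subst sum_ins_diff) (simp_all add: T_insert)
  have s2: "(\<Sum>i\<in>insert r B. \<Sum>j\<in>insert r B - {i}. E i j * T (insert r B - {i} - {j})) =
     (\<Sum>j\<in>B. E r j * T (B - {j})) + (\<Sum>i\<in>B. E i r * T (B - {i})) +
     (\<Sum>i\<in>B. \<Sum>j\<in>B - {i}. E i j * (E r r * T (B - {i} - {j})))"
    using sum2_ins[OF assms, of "\<lambda>i j S. E i j * T S"] assms by (simp add: T_insert)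
  show ?thesis unfolding f0_def RR_def s1 s2
    by (simp add: algebra_simps sum.distrib)
qed


lemma RR_step:
  assumes "finite B" "r \<notin> B" "x \<notin> B" "x \<noteq> r"
  shows "RR r (insert x B) = RR r B * P r x"
proof -
  have fB: "finite B" using assms by simp
  have t1: "T (insert x B) = E x x * T B" using assms by (simp add: T_insert)
  have t2: "(\<Sum>k\<in>insert x B. E r r * T (insert x B - {k})) = E r r * T B + (\<Sum>k\<in>B. E r r * (E x x * T (B - {k})))"
    using assms by (subst sum_ins_diff[where h="\<lambda>S. E r r * T S"]) (simp_all add: T_insert)
  have t3: "(\<Sum>k\<in>insert x B. (E k r + E r k) * T (insert x B - {k})) =
      (E x r + E r x) * T B + (\<Sum>k\<in>B. (E k r + E r k) * (E x x * T (B - {k})))"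
  proof -
    have "(\<Sum>k\<in>insert x B. (E k r + E r k) * T (insert x B - {k})) =
        (E x r + E r x) * T (insert x B - {x}) + (\<Sum>k\<in>B. (E k r + E r k) * T (insert x B - {k}))"
      using assms by simp
    also have "insert x B - {x} = B" using assms by auto
    also have "(\<Sum>k\<in>B. (E k r + E r k) * T (insert x B - {k})) = (\<Sum>k\<in>B. (E k r + E r k) * (E x x * T (B - {k})))"
    proof (rule sum.cong[OF refl])
      fix k assume "k \<in> B"
      then have "insert x B - {k} = insert x (B - {k})" using assms by auto
      then show "(E k r + E r k) * T (insert x B - {k}) = (E k r + E r k) * (E x x * T (B - {k}))"
        using assms by (simp add: T_insert)
    qed
    finally show ?thesis .
  qed
  have t4: "(\<Sum>k\<in>insert x B. \<Sum>l\<in>insert x B - {k}. E k l * E r r * T (insert x B - {k} - {l})) =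
     (\<Sum>l\<in>B. E x l * E r r * T (B - {l})) + (\<Sum>k\<in>B. E k x * E r r * T (B - {k})) +
     (\<Sum>k\<in>B. \<Sum>l\<in>B - {k}. E k l * E r r * (E x x * T (B - {k} - {l})))"
    using sum2_ins[OF fB assms(3), of "\<lambda>i j S. E i j * E r r * T S"] assms by (simp add: T_insert)
  have p2: "(\<Sum>k\<in>B. E r r * T (B - {k})) * P r x = (\<Sum>k\<in>B. E r r * (E x x * T (B - {k})))"
    by (simp add: sum_distrib_right) (metis (no_types, lifting) EP_rr mult.assoc mult.commute)
  have p3: "(\<Sum>k\<in>B. (E k r + E r k) * T (B - {k})) * P r x =
      (\<Sum>k\<in>B. (E k r + E r k) * (E x x * T (B - {k}))) + (\<Sum>k\<in>B. E k x * E r r * T (B - {k})) +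
      (\<Sum>k\<in>B. E x k * E r r * T (B - {k}))"
  proof -
    have "(\<Sum>k\<in>B. (E k r + E r k) * T (B - {k})) * P r x = (\<Sum>k\<in>B. ((E k r + E r k) * P r x) * T (B - {k}))"
      by (simp add: sum_distrib_right) (simp add: algebra_simps)
    also have "\<dots> = (\<Sum>k\<in>B. ((E k r + E r k) * E x x + (E k x + E x k) * E r r) * T (B - {k}))"
      by (simp add: EP_k)
    finally show ?thesis by (simp add: algebra_simps sum.distrib)
  qed
  have p4: "(\<Sum>k\<in>B. \<Sum>l\<in>B - {k}. E k l * E r r * T (B - {k} - {l})) * P r x =
      (\<Sum>k\<in>B. \<Sum>l\<in>B - {k}. E k l * E r r * (E x x * T (B - {k} - {l})))"
  proof -
    have "(\<Sum>k\<in>B. \<Sum>l\<in>B - {k}. E k l * E r r * T (B - {k} - {l})) * P r x =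
        (\<Sum>k\<in>B. \<Sum>l\<in>B - {k}. E k l * (E r r * P r x) * T (B - {k} - {l}))"
      by (simp add: sum_distrib_right) (simp add: algebra_simps)
    then show ?thesis by (simp add: EP_rr algebra_simps)
  qed
  have p1: "T B * P r x = E x x * T B - (E x r + E r x) * T B + E r r * T B"
    unfolding P_def by (simp add: algebra_simps)
  have e: "RR r B * P r x = T B * P r x + (\<Sum>k\<in>B. E r r * T (B - {k})) * P r x
      - (\<Sum>k\<in>B. (E k r + E r k) * T (B - {k})) * P r x
      - (\<Sum>k\<in>B. \<Sum>l\<in>B - {k}. E k l * E r r * T (B - {k} - {l})) * P r x"
    unfolding RR_def by (simp only: left_diff_distrib distrib_right)
  show ?thesis
    unfolding e p1 p2 p3 p4 unfolding RR_def t1 t2 t3 t4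
    by (simp add: algebra_simps)
qed

lemma RR_prod:
  assumes "finite B" "r \<notin> B"
  shows "RR r B = (\<Prod>j\<in>B. P r j)"
  using assms
proof (induction B rule: finite_induct)
  case empty
  then show ?case by (simp add: RR_def T_def)
next
  case (insert x B)
  then show ?case using RR_step[of B r x] by (auto simp: mult.commute)
qed

lemma f0_prod:
  assumes "finite A" "r \<in> A"
  shows "f0 A = (\<Prod>j\<in>A - {r}. P r j)"
proof -
  have "A = insert r (A - {r})" using assms by auto
  then have "f0 A = f0 (insert r (A - {r}))" by simp
  also have "\<dots> = RR r (A - {r})" by (rule f0_RR) (use assms in auto)
  also have "\<dots> = (\<Prod>j\<in>A - {r}. P r j)" using assms by (simp add: RR_prod)
  finally show ?thesis .
qed

lemma P_sq: "P v u * P v u = 0"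
proof -
  have a: "E u v * E v u = - (E u u * E v v)" by (rule R1)
  have b: "E v u * E u v = - (E v v * E u u)" by (rule R1)
  show ?thesis unfolding P_def by (simp add: algebra_simps R2 R3 a b)
qed

lemma T_zero: "finite X \<Longrightarrow> finite Y \<Longrightarrow> v \<in> X \<Longrightarrow> v \<in> Y \<Longrightarrow> T X * T Y = 0"
proof -
  assume a: "finite X" "finite Y" "v \<in> X" "v \<in> Y"
  have "T X = E v v * T (X - {v})" using a T_insert[of "X - {v}" v] by (simp add: insert_absorb)
  moreover have "T Y = E v v * T (Y - {v})" using a T_insert[of "Y - {v}" v] by (simp add: insert_absorb)
  ultimately have "T X * T Y = (E v v * E v v) * (T (X - {v}) * T (Y - {v}))" by (simp add: ac_simps)
  then show ?thesis by (simp add: R2)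
qed

lemma T_union: "finite X \<Longrightarrow> finite Y \<Longrightarrow> X \<inter> Y = {} \<Longrightarrow> T X * T Y = T (X \<union> Y)"
  unfolding T_def by (simp add: prod.union_disjoint)

lemma TP: "finite Z \<Longrightarrow> v \<in> Z \<Longrightarrow> T Z * P v c = T Z * E c c"
proof -
  assume a: "finite Z" "v \<in> Z"
  have "T Z = E v v * T (Z - {v})" using a T_insert[of "Z - {v}" v] by (simp add: insert_absorb)
  then have "T Z * P v c = (E v v * P v c) * T (Z - {v})" by (simp add: algebra_simps)
  also have "\<dots> = (E v v * E c c) * T (Z - {v})" by (simp only: EP_rr)
  also have "\<dots> = T Z * E c c" using \<open>T Z = E v v * T (Z - {v})\<close> by (simp add: algebra_simps)
  finally show ?thesis .
qed

lemma T_prodP: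
  assumes "finite X" "v \<in> X" "finite C"
  shows "T X * (\<Prod>j\<in>C. P v j) = T X * T C"
  using assms(3)
proof (induction C rule: finite_induct)
  case empty then show ?case by (simp add: T_def)
next
  case (insert c C)
  have "T X * (\<Prod>j\<in>insert c C. P v j) = (T X * (\<Prod>j\<in>C. P v j)) * P v c"
    using insert.hyps by (simp add: ac_simps)
  also have "\<dots> = (T X * T C) * P v c" using insert by simp
  also have "\<dots> = T C * (T X * P v c)" by (simp add: ac_simps)
  also have "\<dots> = T C * (T X * E c c)" using insert assms by (simp add: TP)
  also have "\<dots> = T X * T (insert c C)" using insert by (simp add: T_insert algebra_simps)
  finally show ?case .
qed

definition fl :: "'r \<Rightarrow> 'v set \<Rightarrow> 'r" where "fl w X = f0 X - w * T X"

lemma fl_mult_one: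
  assumes "finite X" "finite Y" "X \<inter> Y = {v}"
  shows "fl c X * fl d Y = fl (c + d) (X \<union> Y)"
proof -
  have vX: "v \<in> X" and vY: "v \<in> Y" using assms by auto
  have d: "(X - {v}) \<inter> (Y - {v}) = {}" using assms by auto
  have u: "(X - {v}) \<union> (Y - {v}) = X \<union> Y - {v}" by auto
  have ff: "f0 X * f0 Y = f0 (X \<union> Y)"
    using assms vX vY d u by (simp add: f0_prod[of _ v] prod.union_disjoint[symmetric])
  have tf: "T X * f0 Y = T (X \<union> Y)"
  proof -
    have "T X * f0 Y = T X * T (Y - {v})" using assms vX vY by (simp add: f0_prod[of Y v] T_prodP)
    also have "\<dots> = T (X \<union> (Y - {v}))" using assms by (intro T_union) auto
    also have "X \<union> (Y - {v}) = X \<union> Y" using vX by auto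
    finally show ?thesis .
  qed
  have ft: "f0 X * T Y = T (X \<union> Y)"
  proof -
    have "f0 X * T Y = T Y * f0 X" by (simp add: mult.commute)
    also have "\<dots> = T (Y \<union> X)"
    proof -
      have "T Y * f0 X = T Y * T (X - {v})" using assms vX vY by (simp add: f0_prod[of X v] T_prodP)
      also have "\<dots> = T (Y \<union> (X - {v}))" using assms by (intro T_union) auto
      also have "Y \<union> (X - {v}) = Y \<union> X" using vY by auto
      finally show ?thesis .
    qed
    finally show ?thesis by (simp add: Un_commute)
  qed
  have tt: "T X * T Y = 0" using assms vX vY by (intro T_zero) auto
  have "fl c X * fl d Y = f0 X * f0 Y - d * (f0 X * T Y) - c * (T X * f0 Y) + c * d * (T X * T Y)"
    unfolding fl_def by (simp add: algebra_simps)
  also have "\<dots> = fl (c + d) (X \<union> Y)" unfolding ff tf ft tt fl_def by (simp add: algebra_simps)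
  finally show ?thesis .
qed

lemma fl_mult_two:
  assumes "finite X" "finite Y" "u \<in> X \<inter> Y" "v \<in> X \<inter> Y" "u \<noteq> v"
  shows "fl c X * fl d Y = 0"
proof -
  have vX: "v \<in> X" and vY: "v \<in> Y" and uX: "u \<in> X" and uY: "u \<in> Y" using assms by auto
  have pX: "(\<Prod>j\<in>X - {v}. P v j) = P v u * (\<Prod>j\<in>X - {v} - {u}. P v j)"
    using assms prod.remove[of "X - {v}" u "P v"] by auto
  have pY: "(\<Prod>j\<in>Y - {v}. P v j) = P v u * (\<Prod>j\<in>Y - {v} - {u}. P v j)"
    using assms prod.remove[of "Y - {v}" u "P v"] by auto
  have ff: "f0 X * f0 Y = 0"
  proof -
    have "f0 X * f0 Y = (P v u * P v u) * ((\<Prod>j\<in>X - {v} - {u}. P v j) * (\<Prod>j\<in>Y - {v} - {u}. P v j))"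
      using assms vX vY by (simp add: f0_prod[of X v] f0_prod[of Y v] pX pY ac_simps)
    then show ?thesis by (simp add: P_sq)
  qed
  have tf: "T X * f0 Y = 0"
  proof -
    have "T X * f0 Y = T X * T (Y - {v})" using assms vX vY by (simp add: f0_prod[of Y v] T_prodP)
    also have "\<dots> = 0" using assms by (intro T_zero[of _ _ u]) auto
    finally show ?thesis .
  qed
  have ft: "f0 X * T Y = 0"
  proof -
    have "f0 X * T Y = T Y * T (X - {v})" using assms vX vY by (simp add: f0_prod[of X v] T_prodP mult.commute)
    also have "\<dots> = 0" using assms by (intro T_zero[of _ _ u]) auto
    finally show ?thesis .
  qed
  have tt: "T X * T Y = 0" using assms vX vY by (intro T_zero) auto
  have "fl c X * fl d Y = f0 X * f0 Y - d * (f0 X * T Y) - c * (T X * f0 Y) + c * d * (T X * T Y)"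
    unfolding fl_def by (simp add: algebra_simps)
  then show ?thesis unfolding ff tf ft tt by simp
qed
end


lemma walk_len: "hg_walk F vs es \<Longrightarrow> length vs = Suc (length es)"
  by (simp add: hg_walk_def)

lemma walk_vs_ne: "hg_walk F vs es \<Longrightarrow> vs \<noteq> []"
  by (auto simp: hg_walk_def)

lemma walk_mono: "hg_walk F vs es \<Longrightarrow> F \<subseteq> F' \<Longrightarrow> hg_walk F' vs es"
  by (auto simp: hg_walk_def)

lemma walk_edges: "hg_walk F vs es \<Longrightarrow> set es \<subseteq> F"
  by (auto simp: hg_walk_def in_set_conv_nth)

lemma walk_vertex_in_edge:
  assumes "hg_walk F vs es" "es \<noteq> []" "v \<in> set vs"
  shows "\<exists>e\<in>set es. v \<in> e"
proof -
  obtain i where i: "i < length vs" "vs ! i = v" using assms(3) by (auto simp: in_set_conv_nth)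
  have L: "length vs = Suc (length es)" using assms(1) by (simp add: hg_walk_def)
  show ?thesis
  proof (cases "i < length es")
    case True
    then show ?thesis using assms(1) i by (auto simp: hg_walk_def intro!: bexI[of _ "es ! i"])
  next
    case False
    then have "i = Suc (length es - 1)" using i L assms(2) by auto
    moreover have "length es - 1 < length es" using assms(2) by simp
    ultimately show ?thesis using assms(1) i by (auto simp: hg_walk_def intro!: bexI[of _ "es ! (length es - 1)"])
  qed
qed

lemma walk_single: "A \<in> F \<Longrightarrow> x \<in> A \<Longrightarrow> y \<in> A \<Longrightarrow> hg_walk F [x, y] [A]"
  by (auto simp: hg_walk_def)

lemma walk_snoc:
  assumes "hg_walk F vs es" "A \<in> F" "last vs \<in> A" "y \<in> A"
  shows "hg_walk F (vs @ [y]) (es @ [A])"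
proof -
  have L: "length vs = Suc (length es)" using assms(1) by (simp add: hg_walk_def)
  have lv: "vs ! length es = last vs" using L by (simp add: last_conv_nth walk_vs_ne[OF assms(1)])
  show ?thesis unfolding hg_walk_def
  proof (rule conjI)
    show "length (vs @ [y]) = length (es @ [A]) + 1" using L by simp
    show "\<forall>i<length (es @ [A]). (es @ [A]) ! i \<in> F \<and> (vs @ [y]) ! i \<in> (es @ [A]) ! i \<and> (vs @ [y]) ! Suc i \<in> (es @ [A]) ! i"
    proof (intro allI impI)
      fix i assume i: "i < length (es @ [A])"
    show "(es @ [A]) ! i \<in> F \<and> (vs @ [y]) ! i \<in> (es @ [A]) ! i \<and> (vs @ [y]) ! Suc i \<in> (es @ [A]) ! i"
    proof (cases "i < length es")
      case True
      then show ?thesis using assms(1) L by (auto simp: hg_walk_def nth_append)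
    next
      case False
      then have "i = length es" using i by simp
      then show ?thesis using assms L lv by (auto simp: nth_append)
    qed
  qed
  qed
qed

lemma walk_cons:
  assumes "hg_walk F vs es" "A \<in> F" "hd vs \<in> A" "x \<in> A"
  shows "hg_walk F (x # vs) (A # es)"
proof -
  have L: "length vs = Suc (length es)" using assms(1) by (simp add: hg_walk_def)
  have hv: "vs ! 0 = hd vs" using L by (simp add: hd_conv_nth walk_vs_ne[OF assms(1)])
  show ?thesis unfolding hg_walk_def
  proof (rule conjI)
    show "length (x # vs) = length (A # es) + 1" using L by simp
    show "\<forall>i<length (A # es). (A # es) ! i \<in> F \<and> (x # vs) ! i \<in> (A # es) ! i \<and> (x # vs) ! Suc i \<in> (A # es) ! i"
    proof (intro allI impI)
      fix i assume i: "i < length (A # es)"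
    show "(A # es) ! i \<in> F \<and> (x # vs) ! i \<in> (A # es) ! i \<and> (x # vs) ! Suc i \<in> (A # es) ! i"
    proof (cases i)
      case 0
      then show ?thesis using assms hv by simp
    next
      case (Suc j)
      then have "j < length es" using i by simp
      then show ?thesis using assms(1) Suc by (auto simp: hg_walk_def)
    qed
  qed
  qed
qed

lemma crossing:
  assumes "xs \<noteq> []" "P (hd xs)" "\<not> P (last xs)"
  shows "\<exists>i. Suc i < length xs \<and> P (xs ! i) \<and> \<not> P (xs ! Suc i)"
  using assms
proof (induction xs)
  case Nil then show ?case by simp
next
  case (Cons a xs)
  show ?case
  proof (cases xs)
    case Nil then show ?thesis using Cons by simp
  next
    case (Cons b ys)
    show ?thesis
    proof (cases "P b")
      case True
      then have "\<exists>i. Suc i < length xs \<and> P (xs ! i) \<and> \<not> P (xs ! Suc i)"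
        using Cons.IH Cons.prems Cons by auto
      then obtain i where "Suc i < length xs" "P (xs ! i)" "\<not> P (xs ! Suc i)" by blast
      then show ?thesis by (intro exI[of _ "Suc i"]) auto
    next
      case False
      then show ?thesis using Cons.prems Cons by (intro exI[of _ 0]) auto
    qed
  qed
qed


definition conn_ord :: "'v set list \<Rightarrow> bool" where
  "conn_ord os \<longleftrightarrow> distinct os \<and> (\<forall>k. 0 < k \<and> k < length os \<longrightarrow> os ! k \<inter> \<Union>(set (take k os)) \<noteq> {})"

definition good :: "'v set list \<Rightarrow> bool" where
  "good os \<longleftrightarrow> (\<forall>k. 0 < k \<and> k < length os \<longrightarrow> card (os ! k \<inter> \<Union>(set (take k os))) = 1)"

lemma snoc_prop:
  "(\<forall>k. 0 < k \<and> k < length (ps @ [A]) \<longrightarrow> Q ((ps @ [A]) ! k) (take k (ps @ [A]))) \<longleftrightarrow>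
   (\<forall>k. 0 < k \<and> k < length ps \<longrightarrow> Q (ps ! k) (take k ps)) \<and> (ps \<noteq> [] \<longrightarrow> Q A ps)"
proof
  assume h: "\<forall>k. 0 < k \<and> k < length (ps @ [A]) \<longrightarrow> Q ((ps @ [A]) ! k) (take k (ps @ [A]))"
  show "(\<forall>k. 0 < k \<and> k < length ps \<longrightarrow> Q (ps ! k) (take k ps)) \<and> (ps \<noteq> [] \<longrightarrow> Q A ps)"
  proof (intro conjI allI impI)
    fix k assume k: "0 < k \<and> k < length ps"
    then show "Q (ps ! k) (take k ps)" using h[rule_format, of k] by (simp add: nth_append)
  next
    assume "ps \<noteq> []"
    then show "Q A ps" using h[rule_format, of "length ps"] by simp
  qed
next
  assume h: "(\<forall>k. 0 < k \<and> k < length ps \<longrightarrow> Q (ps ! k) (take k ps)) \<and> (ps \<noteq> [] \<longrightarrow> Q A ps)"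
  show "\<forall>k. 0 < k \<and> k < length (ps @ [A]) \<longrightarrow> Q ((ps @ [A]) ! k) (take k (ps @ [A]))"
  proof (intro allI impI)
    fix k assume k: "0 < k \<and> k < length (ps @ [A])"
    show "Q ((ps @ [A]) ! k) (take k (ps @ [A]))"
    proof (cases "k < length ps")
      case True then show ?thesis using h k by (simp add: nth_append)
    next
      case False
      then have "k = length ps" using k by simp
      then show ?thesis using h k by auto
    qed
  qed
qed

lemma conn_ord_snoc: "conn_ord (ps @ [A]) \<longleftrightarrow> conn_ord ps \<and> A \<notin> set ps \<and> (ps \<noteq> [] \<longrightarrow> A \<inter> \<Union>(set ps) \<noteq> {})"
  unfolding conn_ord_def using snoc_prop[of ps A "\<lambda>B qs. B \<inter> \<Union>(set qs) \<noteq> {}"] by auto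

lemma good_snoc: "good (ps @ [A]) \<longleftrightarrow> good ps \<and> (ps \<noteq> [] \<longrightarrow> card (A \<inter> \<Union>(set ps)) = 1)"
  unfolding good_def using snoc_prop[of ps A "\<lambda>B qs. card (B \<inter> \<Union>(set qs)) = 1"] by auto

lemma good_single: "good [A]" by (auto simp: good_def)
lemma conn_ord_single: "conn_ord [A]" by (auto simp: conn_ord_def)

lemma extend_edge:
  assumes hg: "hypergraph V E" and con: "hg_connected V E"
    and ps: "set ps \<subseteq> E" "ps \<noteq> []" "set ps \<noteq> E"
  shows "\<exists>A \<in> E - set ps. A \<inter> \<Union>(set ps) \<noteq> {}"
proof (rule ccontr)
  assume no: "\<not> ?thesis"
  let ?U = "\<Union>(set ps)"
  obtain B where B: "B \<in> E" "B \<notin> set ps" using ps by auto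
  have "card B \<ge> 2" "B \<subseteq> V" using hg B unfolding hypergraph_def by auto
  then have "B \<noteq> {}" by auto
  then obtain w where w: "w \<in> B" by blast
  have wV: "w \<in> V" using w \<open>B \<subseteq> V\<close> by auto
  have wU: "w \<notin> ?U" using no B w by auto
  obtain C where C: "C \<in> set ps" using ps by (cases ps) auto
  have "card C \<ge> 2" "C \<subseteq> V" using hg C ps unfolding hypergraph_def by auto
  then have "C \<noteq> {}" by auto
  then obtain u where u: "u \<in> C" by blast
  have uV: "u \<in> V" using u \<open>C \<subseteq> V\<close> by auto
  have uU: "u \<in> ?U" using u C by auto
  obtain vs es where wk: "hg_walk E vs es" "hd vs = u" "last vs = w"
    using con uV wV unfolding hg_connected_def by blast
  have "vs \<noteq> []" using walk_vs_ne[OF wk(1)] .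
  then obtain i where i: "Suc i < length vs" "vs ! i \<in> ?U" "vs ! Suc i \<notin> ?U"
    using crossing[of vs "\<lambda>x. x \<in> ?U"] wk uU wU by auto
  have ie: "i < length es" using i(1) walk_len[OF wk(1)] by simp
  have e: "es ! i \<in> E" "vs ! i \<in> es ! i" "vs ! Suc i \<in> es ! i"
    using wk(1) ie unfolding hg_walk_def by auto
  have "es ! i \<notin> set ps" using e(3) i(3) by auto
  then show False using no e(1,2) i(2) by auto
qed

lemma ord_exists_aux:
  assumes hg: "hypergraph V E" and con: "hg_connected V E" and E: "E \<noteq> {}"
  shows "1 \<le> n \<Longrightarrow> n \<le> card E \<Longrightarrow> \<exists>ps. conn_ord ps \<and> set ps \<subseteq> E \<and> length ps = n"
proof (induction n)
  case 0 then show ?case by simp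
next
  case (Suc n)
  have fE: "finite E"
  proof -
    have "E \<subseteq> Pow V" using hg unfolding hypergraph_def by auto
    moreover have "finite V" using hg unfolding hypergraph_def by auto
    ultimately show ?thesis using finite_subset by blast
  qed
  show ?case
  proof (cases "n = 0")
    case True
    obtain A where "A \<in> E" using E by auto
    then show ?thesis using True by (intro exI[of _ "[A]"]) (simp add: conn_ord_single)
  next
    case False
    then obtain ps where ps: "conn_ord ps" "set ps \<subseteq> E" "length ps = n"
      using Suc by auto
    have dps: "distinct ps" using ps(1) unfolding conn_ord_def by simp
    have "card (set ps) = n" using dps ps(3) by (simp add: distinct_card)
    then have "set ps \<noteq> E" using Suc.prems(2) by auto
    moreover have "ps \<noteq> []" using ps(3) False by auto
    ultimately obtain A where A: "A \<in> E - set ps" "A \<inter> \<Union>(set ps) \<noteq> {}"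
      using extend_edge[OF hg con ps(2)] by blast
    show ?thesis
      using A ps by (intro exI[of _ "ps @ [A]"]) (simp add: conn_ord_snoc)
  qed
qed

lemma finite_E: "hypergraph V E \<Longrightarrow> finite E"
proof -
  assume hg: "hypergraph V E"
  have "E \<subseteq> Pow V" using hg unfolding hypergraph_def by auto
  moreover have "finite V" using hg unfolding hypergraph_def by auto
  ultimately show ?thesis using finite_subset by blast
qed

lemma ord_exists:
  assumes hg: "hypergraph V E" and con: "hg_connected V E" and E: "E \<noteq> {}"
  shows "\<exists>ps. conn_ord ps \<and> set ps = E"
proof -
  have fE: "finite E" using finite_E[OF hg] .
  then have "1 \<le> card E" using E by (simp add: Suc_leI card_gt_0_iff)
  then obtain ps where ps: "conn_ord ps" "set ps \<subseteq> E" "length ps = card E"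
    using ord_exists_aux[OF hg con E] by blast
  have "distinct ps" using ps(1) unfolding conn_ord_def by simp
  then have "card (set ps) = card E" using ps(3) by (simp add: distinct_card)
  then have "set ps = E" using ps(2) fE by (simp add: card_subset_eq)
  then show ?thesis using ps(1) by blast
qed

lemma V_union:
  assumes hg: "hypergraph V E" and con: "hg_connected V E" and E: "E \<noteq> {}"
  shows "\<Union>E = V"
proof
  show "\<Union>E \<subseteq> V" using hg unfolding hypergraph_def by auto
  show "V \<subseteq> \<Union>E"
  proof
    fix v assume v: "v \<in> V"
    obtain B where B: "B \<in> E" using E by auto
    have "card B \<ge> 2" "B \<subseteq> V" using hg B unfolding hypergraph_def by auto
    then have "B \<noteq> {}" by auto
  then obtain w where w: "w \<in> B" by blast
    show "v \<in> \<Union>E"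
    proof (cases "v = w")
      case True then show ?thesis using w B by auto
    next
      case False
      obtain vs es where wk: "hg_walk E vs es" "hd vs = v" "last vs = w"
        using con v w \<open>B \<subseteq> V\<close> unfolding hg_connected_def by blast
      have "es \<noteq> []"
      proof
        assume "es = []"
        then have "length vs = 1" using walk_len[OF wk(1)] by simp
        then obtain a where "vs = [a]" by (metis length_0_conv length_Suc_conv One_nat_def)
        then show False using wk False by simp
      qed
      then have "0 < length es" by simp
      then have h: "es ! 0 \<in> E \<and> vs ! 0 \<in> es ! 0" using wk(1) unfolding hg_walk_def by blast
      have "vs ! 0 = v" using wk(2) walk_vs_ne[OF wk(1)] by (simp add: hd_conv_nth)
      then show ?thesis using h by blast
    qed
  qed
qed

lemma V_single:
  assumes con: "hg_connected V {}" and V: "V \<noteq> {}"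
  shows "\<exists>v. V = {v}"
proof -
  obtain v where v: "v \<in> V" using V by auto
  have "u = v" if uV: "u \<in> V" for u
  proof -
    obtain vs es where wk: "hg_walk {} vs es" "hd vs = u" "last vs = v"
      using con v uV unfolding hg_connected_def by blast
    have "set es \<subseteq> {}" using walk_edges[OF wk(1)] .
    then have "es = []" by simp
    then have "length vs = 1" using walk_len[OF wk(1)] by simp
    then have "hd vs = last vs" by (cases vs) simp_all
    then show ?thesis using wk by simp
  qed
  then have "V = {v}" using v by blast
  then show ?thesis by blast
qed


lemma good_nocycle:
  assumes co: "conn_ord os" and gd: "good os" and sE: "set os = E" and hg: "hypergraph V E"
    and cy: "hg_cycle E vs es"
  shows False
proof -
  have wk: "hg_walk E vs es" and m2: "2 \<le> length es" and dv: "distinct (butlast vs)"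
    and lh: "last vs = hd vs" and des: "distinct es"
    using cy unfolding hg_cycle_def by auto
  define m where "m = length es"
  have L: "length vs = Suc m" using walk_len[OF wk] m_def by simp
  have W: "\<And>j. j < m \<Longrightarrow> es ! j \<in> E \<and> vs ! j \<in> es ! j \<and> vs ! Suc j \<in> es ! j"
    using wk unfolding hg_walk_def m_def by auto
  have vm: "vs ! m = vs ! 0"
  proof -
    have "vs \<noteq> []" using L by auto
    then have "last vs = vs ! m" "hd vs = vs ! 0" using L by (simp_all add: last_conv_nth hd_conv_nth)
    then show ?thesis using lh by simp
  qed
  have dvs: "\<And>j j'. j < m \<Longrightarrow> j' < m \<Longrightarrow> vs ! j = vs ! j' \<Longrightarrow> j = j'"
  proof -
    fix j j' assume j: "j < m" "j' < m" "vs ! j = vs ! j'"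
    have "butlast vs ! j = vs ! j" "butlast vs ! j' = vs ! j'" using j L by (simp_all add: nth_butlast)
    moreover have "length (butlast vs) = m" using L by simp
    ultimately show "j = j'" using dv j nth_eq_iff_index_eq by metis
  qed
  have des': "\<And>j j'. j < m \<Longrightarrow> j' < m \<Longrightarrow> es ! j = es ! j' \<Longrightarrow> j = j'"
    using des m_def nth_eq_iff_index_eq by metis
  have dos: "distinct os" using co unfolding conn_ord_def by simp
  have m1: "1 < m" using m2 m_def by simp
  define K where "K = {k. k < length os \<and> os ! k \<in> set es}"
  have fK: "finite K" unfolding K_def by simp
  have e0: "es ! 0 \<in> set es" using m2 by (intro nth_mem) linarith
  moreover have "es ! 0 \<in> set os" using W[of 0] m1 sE by auto
  ultimately have "K \<noteq> {}" unfolding K_def by (auto simp: in_set_conv_nth)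
  define kmax where "kmax = Max K"
  have kK: "kmax \<in> K" using fK \<open>K \<noteq> {}\<close> kmax_def by simp
  define A where "A = os ! kmax"
  have Aes: "A \<in> set es" using kK unfolding K_def A_def by simp
  have other: "x \<in> \<Union>(set (take kmax os))" if e: "e \<in> set es" "e \<noteq> A" "x \<in> e" for e x
  proof -
    have "e \<in> set os" using e W sE m_def by (auto simp: in_set_conv_nth)
    then obtain k where k: "k < length os" "os ! k = e" by (auto simp: in_set_conv_nth)
    then have "k \<in> K" using e unfolding K_def by simp
    then have "k \<le> kmax" using fK kmax_def by simp
    moreover have "k \<noteq> kmax" using k e A_def by auto
    ultimately have "k < kmax" by simp
    then have "take kmax os ! k = e" "k < length (take kmax os)" using k by auto
    then have "e \<in> set (take kmax os)" by (metis nth_mem)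
    then show ?thesis using e by auto
  qed
  obtain i where i: "i < m" "es ! i = A" using Aes m_def by (auto simp: in_set_conv_nth)
  define a where "a = vs ! i"
  define b where "b = vs ! Suc i"
  have aA: "a \<in> A" and bA: "b \<in> A" using W[OF i(1)] i a_def b_def by auto
  have ab: "a \<noteq> b"
  proof (cases "Suc i < m")
    case True then show ?thesis using dvs[of i "Suc i"] i a_def b_def by auto
  next
    case False
    then have "Suc i = m" using i by simp
    then have "b = vs ! 0" using vm b_def by simp
    moreover have "i \<noteq> 0" using \<open>Suc i = m\<close> m1 by simp
    ultimately show ?thesis using dvs[of i 0] i a_def by auto
  qed
  have bU: "b \<in> \<Union>(set (take kmax os))"
  proof (cases "Suc i < m")
    case True
    have "es ! Suc i \<noteq> A" using des'[of "Suc i" i] True i by auto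
    moreover have "b \<in> es ! Suc i" using W[OF True] b_def by simp
    moreover have "es ! Suc i \<in> set es" using True m_def by (intro nth_mem) simp
    ultimately show ?thesis using other by blast
  next
    case False
    then have "Suc i = m" using i by simp
    have "i \<noteq> 0" using \<open>Suc i = m\<close> m1 by simp
    have "b = vs ! 0" using vm b_def \<open>Suc i = m\<close> by simp
    moreover have "es ! 0 \<noteq> A" using des'[of 0 i] i \<open>i \<noteq> 0\<close> m1 by auto
    moreover have "vs ! 0 \<in> es ! 0" using W[of 0] m1 by simp
    ultimately show ?thesis using other[OF e0] by blast
  qed
  have aU: "a \<in> \<Union>(set (take kmax os))"
  proof (cases "i = 0")
    case False
    then obtain j where j: "i = Suc j" by (cases i) auto
    then have "j < m" using i by simp
    have "es ! j \<noteq> A" using des'[of j i] i j \<open>j < m\<close> by auto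
    moreover have "a \<in> es ! j" using W[OF \<open>j < m\<close>] a_def j by simp
    moreover have "es ! j \<in> set es" using \<open>j < m\<close> m_def by (intro nth_mem) simp
    ultimately show ?thesis using other by blast
  next
    case True
    then have "a = vs ! m" using vm a_def by simp
    have "m - 1 < m" "Suc (m - 1) = m" using m1 by auto
    have "es ! (m - 1) \<noteq> A" using des'[of "m - 1" i] i True m1 by auto
    moreover have "a \<in> es ! (m - 1)" using W[OF \<open>m - 1 < m\<close>] \<open>a = vs ! m\<close> \<open>Suc (m - 1) = m\<close> by simp
    moreover have "es ! (m - 1) \<in> set es" using \<open>m - 1 < m\<close> m_def by (intro nth_mem) simp
    ultimately show ?thesis using other by blast
  qed
  have kpos: "0 < kmax" using aU by (cases kmax) auto
  have klt: "kmax < length os" using kK unfolding K_def by simp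
  have "card (A \<inter> \<Union>(set (take kmax os))) = 1" using gd kpos klt unfolding good_def A_def by blast
  moreover have "finite A"
  proof -
    have "A \<in> E" using Aes W sE m_def i by auto
    then have "card A \<ge> 2" using hg unfolding hypergraph_def by auto
    then show ?thesis using card.infinite by fastforce
  qed
  moreover have "{a, b} \<subseteq> A \<inter> \<Union>(set (take kmax os))" using aA bA aU bU by auto
  ultimately have "card {a, b} \<le> 1" by (metis card_mono finite_Int)
  then show False using ab by simp
qed


lemma good_path:
  assumes "conn_ord ps" "good ps" "ps \<noteq> []"
  shows "x \<in> \<Union>(set ps) \<Longrightarrow> y \<in> \<Union>(set ps) \<Longrightarrow> x \<noteq> y \<Longrightarrow>
    \<exists>vs es. hg_walk (set ps) vs es \<and> hd vs = x \<and> last vs = y \<and> distinct vs \<and> distinct es \<and> es \<noteq> []"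
  using assms
proof (induction ps arbitrary: x y rule: rev_induct)
  case Nil then show ?case by simp
next
  case (snoc A ps)
  show ?case
  proof (cases "ps = []")
    case True
    then have "x \<in> A" "y \<in> A" using snoc.prems by auto
    then show ?thesis using snoc.prems(3)
      by (intro exI[of _ "[x, y]"] exI[of _ "[A]"]) (simp add: True walk_single)
  next
    case False
    let ?U = "\<Union>(set ps)"
    have co: "conn_ord ps" and An: "A \<notin> set ps" using snoc.prems(4) by (simp_all add: conn_ord_snoc)
    have gd: "good ps" and c1: "card (A \<inter> ?U) = 1" using snoc.prems(5) False by (simp_all add: good_snoc)
    obtain c where c: "A \<inter> ?U = {c}" using c1 by (auto simp: card_Suc_eq)
    have IH: "\<And>x y. x \<in> ?U \<Longrightarrow> y \<in> ?U \<Longrightarrow> x \<noteq> y \<Longrightarrow>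
      \<exists>vs es. hg_walk (set ps) vs es \<and> hd vs = x \<and> last vs = y \<and> distinct vs \<and> distinct es \<and> es \<noteq> []"
      using snoc.IH co gd False by blast
    have Fs: "set ps \<subseteq> set (ps @ [A])" "A \<in> set (ps @ [A])" by auto
    have vU: "v \<in> ?U" if h: "hg_walk (set ps) vs es" "es \<noteq> []" "v \<in> set vs" for vs es v
    proof -
      obtain e where "e \<in> set es" "v \<in> e" using walk_vertex_in_edge[OF h] by blast
      moreover have "set es \<subseteq> set ps" using walk_edges[OF h(1)] .
      ultimately show "v \<in> ?U" by blast
    qed
    have xy: "x \<in> ?U \<union> A" "y \<in> ?U \<union> A" using snoc.prems by auto
    show ?thesis
    proof (cases "x \<in> A \<and> y \<in> A")
      case True
      then show ?thesis using snoc.prems(3)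
        by (intro exI[of _ "[x, y]"] exI[of _ "[A]"]) (simp add: walk_single)
    next
      case nA: False
      show ?thesis
      proof (cases "x \<in> ?U \<and> y \<in> ?U")
        case True
        then obtain vs es where p: "hg_walk (set ps) vs es" "hd vs = x" "last vs = y" "distinct vs" "distinct es" "es \<noteq> []"
          using IH snoc.prems(3) by blast
        then show ?thesis using walk_mono[OF p(1) Fs(1)] by blast
      next
        case nU: False
        show ?thesis
        proof (cases "x \<in> A")
          case False
          then have xU: "x \<in> ?U" using xy by auto
          then have yU: "y \<notin> ?U" using nU by auto
          then have yA: "y \<in> A" using xy by auto
          have cU: "c \<in> ?U" and cA: "c \<in> A" using c by auto
          have "x \<noteq> c" using False cA by auto
          then obtain vs es where p: "hg_walk (set ps) vs es" "hd vs = x" "last vs = c" "distinct vs" "distinct es" "es \<noteq> []"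
            using IH xU cU by blast
          have w: "hg_walk (set (ps @ [A])) (vs @ [y]) (es @ [A])"
            using walk_snoc[OF walk_mono[OF p(1) Fs(1)] Fs(2)] p(3) cA yA by simp
          have "y \<notin> set vs" using vU[OF p(1) p(6)] yU by blast
          moreover have "A \<notin> set es" using walk_edges[OF p(1)] An by blast
          moreover have "hd (vs @ [y]) = x" using p(2) walk_vs_ne[OF p(1)] by simp
          ultimately show ?thesis using w p by (intro exI[of _ "vs @ [y]"] exI[of _ "es @ [A]"]) simp
        next
          case True
          then have yA: "y \<notin> A" using nA by auto
          then have yU: "y \<in> ?U" using xy by auto
          have xU: "x \<notin> ?U" using nU yU by auto
          have cU: "c \<in> ?U" and cA: "c \<in> A" using c by auto
          have "c \<noteq> y" using yA cA by auto
          then obtain vs es where p: "hg_walk (set ps) vs es" "hd vs = c" "last vs = y" "distinct vs" "distinct es" "es \<noteq> []"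
            using IH yU cU by blast
          have w: "hg_walk (set (ps @ [A])) (x # vs) (A # es)"
            using walk_cons[OF walk_mono[OF p(1) Fs(1)] Fs(2)] p(2) cA True by simp
          have "x \<notin> set vs" using vU[OF p(1) p(6)] xU by blast
          moreover have "A \<notin> set es" using walk_edges[OF p(1)] An by blast
          moreover have "last (x # vs) = y" using p(3) walk_vs_ne[OF p(1)] by simp
          ultimately show ?thesis using w p by (intro exI[of _ "x # vs"] exI[of _ "A # es"]) simp
        qed
      qed
    qed
  qed
qed

lemma two_elems: "finite X \<Longrightarrow> X \<noteq> {} \<Longrightarrow> card X \<noteq> 1 \<Longrightarrow> \<exists>x y. x \<in> X \<and> y \<in> X \<and> x \<noteq> y"
proof -
  assume a: "finite X" "X \<noteq> {}" "card X \<noteq> 1"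
  then obtain x where x: "x \<in> X" by blast
  show ?thesis
  proof (rule ccontr)
    assume "\<not> ?thesis"
    then have "X = {x}" using x by blast
    then show False using a by simp
  qed
qed

lemma nth_notin_take:
  assumes d: "distinct xs" and k: "k < length xs" shows "xs ! k \<notin> set (take k xs)"
proof -
  have e: "xs = take k xs @ xs ! k # drop (Suc k) xs" by (rule id_take_nth_drop[OF k])
  from d have "distinct (take k xs @ xs ! k # drop (Suc k) xs)" by (subst (asm) e)
  then show ?thesis by auto
qed

lemma bad_cycle:
  assumes co: "conn_ord os" and ng: "\<not> good os" and sE: "set os = E" and hg: "hypergraph V E"
  shows "\<exists>vs es. hg_cycle E vs es"
proof -
  let ?Q = "\<lambda>k. 0 < k \<and> k < length os \<and> card (os ! k \<inter> \<Union>(set (take k os))) \<noteq> 1"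
  have "\<exists>k. ?Q k" using ng unfolding good_def by blast
  define k where "k = (LEAST k. ?Q k)"
  have k: "?Q k" unfolding k_def by (rule LeastI_ex) fact
  have kmin: "\<And>j. j < k \<Longrightarrow> \<not> ?Q j" unfolding k_def by (rule not_less_Least)
  define ps where "ps = take k os"
  have gps: "good ps" unfolding good_def ps_def
  proof (intro allI impI)
    fix j assume j: "0 < j \<and> j < length (take k os)"
    then have "j < k" "j < length os" by auto
    then have "\<not> ?Q j" using kmin by blast
    then have "card (os ! j \<inter> \<Union>(set (take j os))) = 1" using j \<open>j < length os\<close> by blast
    moreover have "take k os ! j = os ! j" using \<open>j < k\<close> by simp
    moreover have "take j (take k os) = take j os" using \<open>j < k\<close> by (simp add: min_def)
    ultimately show "card (take k os ! j \<inter> \<Union>(set (take j (take k os)))) = 1" by simp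
  qed
  have dos: "distinct os" using co unfolding conn_ord_def by simp
  have cps: "conn_ord ps" unfolding conn_ord_def ps_def
  proof (intro conjI allI impI)
    show "distinct (take k os)" using dos by simp
    fix j assume j: "0 < j \<and> j < length (take k os)"
    then have "j < k" "j < length os" by auto
    then have "os ! j \<inter> \<Union>(set (take j os)) \<noteq> {}" using co j unfolding conn_ord_def by blast
    moreover have "take k os ! j = os ! j" using \<open>j < k\<close> by simp
    moreover have "take j (take k os) = take j os" using \<open>j < k\<close> by (simp add: min_def)
    ultimately show "take k os ! j \<inter> \<Union>(set (take j (take k os))) \<noteq> {}" by simp
  qed
  have ne: "ps \<noteq> []" using k unfolding ps_def by auto
  define A where "A = os ! k"
  have AE: "A \<in> E" using k sE A_def by auto
  have fA: "finite A"
  proof -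
    have "card A \<ge> 2" using hg AE unfolding hypergraph_def by auto
    then show ?thesis using card.infinite by fastforce
  qed
  have "A \<inter> \<Union>(set ps) \<noteq> {}" using co k unfolding conn_ord_def A_def ps_def by blast
  moreover have "card (A \<inter> \<Union>(set ps)) \<noteq> 1" using k A_def ps_def by simp
  ultimately obtain x y where xy: "x \<in> A \<inter> \<Union>(set ps)" "y \<in> A \<inter> \<Union>(set ps)" "x \<noteq> y"
    using two_elems[of "A \<inter> \<Union>(set ps)"] fA by blast
  obtain vs es where p: "hg_walk (set ps) vs es" "hd vs = x" "last vs = y" "distinct vs" "distinct es" "es \<noteq> []"
    using good_path[OF cps gps ne] xy by blast
  have psE: "set ps \<subseteq> E" using set_take_subset[of k os] sE unfolding ps_def by blast
  have w: "hg_walk E (vs @ [x]) (es @ [A])"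
    using walk_snoc[OF walk_mono[OF p(1) psE] AE] p(3) xy by auto
  have Anot: "A \<notin> set es"
  proof -
    have "A \<notin> set ps" using nth_notin_take[OF dos] k unfolding A_def ps_def by blast
    then show ?thesis using walk_edges[OF p(1)] by blast
  qed
  have "hg_cycle E (vs @ [x]) (es @ [A])"
    unfolding hg_cycle_def
  proof (intro conjI)
    show "hg_walk E (vs @ [x]) (es @ [A])" by (rule w)
    show "2 \<le> length (es @ [A])" using p(6) by (cases es) auto
    show "distinct (butlast (vs @ [x]))" using p(4) by simp
    show "last (vs @ [x]) = hd (vs @ [x])" using p(2) walk_vs_ne[OF p(1)] by simp
    show "distinct (es @ [A])" using p(5) Anot by simp
  qed
  then show ?thesis by blast
qed


context Erules
begin

lemma ord_prod:
  assumes "conn_ord ps" "ps \<noteq> []" "\<forall>A\<in>set ps. finite A \<and> 2 \<le> card A"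
  shows "(\<Prod>A\<in>set ps. fl (w A) A) = (if good ps then fl (\<Sum>A\<in>set ps. w A) (\<Union>(set ps)) else 0) \<and>
         (good ps \<longrightarrow> card (\<Union>(set ps)) = 1 + (\<Sum>A\<in>set ps. card A - 1))"
  using assms
proof (induction ps rule: rev_induct)
  case Nil then show ?case by simp
next
  case (snoc A ps)
  have fA: "finite A" and cA: "2 \<le> card A" using snoc.prems(3) by auto
  show ?case
  proof (cases "ps = []")
    case True
    then show ?thesis using cA by (simp add: good_single)
  next
    case False
    let ?U = "\<Union>(set ps)"
    have co: "conn_ord ps" and An: "A \<notin> set ps" and ne: "A \<inter> ?U \<noteq> {}"
      using snoc.prems(1) False by (simp_all add: conn_ord_snoc)
    have fin: "\<forall>B\<in>set ps. finite B \<and> 2 \<le> card B" using snoc.prems(3) by simp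
    have fU: "finite ?U" using fin by auto
    have IH: "(\<Prod>B\<in>set ps. fl (w B) B) = (if good ps then fl (\<Sum>B\<in>set ps. w B) ?U else 0) \<and>
         (good ps \<longrightarrow> card ?U = 1 + (\<Sum>B\<in>set ps. card B - 1))"
      using snoc.IH co False fin by blast
    have sp: "set (ps @ [A]) = insert A (set ps)" by simp
    have un: "\<Union>(set (ps @ [A])) = A \<union> ?U" by auto
    have pr: "(\<Prod>B\<in>set (ps @ [A]). fl (w B) B) = fl (w A) A * (\<Prod>B\<in>set ps. fl (w B) B)"
      unfolding sp using An by simp
    have gs: "good (ps @ [A]) \<longleftrightarrow> good ps \<and> card (A \<inter> ?U) = 1" using False by (simp add: good_snoc)
    show ?thesis
    proof (cases "good ps")
      case gd: True
      then have IH1: "(\<Prod>B\<in>set ps. fl (w B) B) = fl (\<Sum>B\<in>set ps. w B) ?U"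
        and IH2: "card ?U = 1 + (\<Sum>B\<in>set ps. card B - 1)" using IH by auto
      show ?thesis
      proof (cases "card (A \<inter> ?U) = 1")
        case True
        then obtain v where v: "A \<inter> ?U = {v}" by (auto simp: card_Suc_eq)
        have "fl (w A) A * fl (\<Sum>B\<in>set ps. w B) ?U = fl (w A + (\<Sum>B\<in>set ps. w B)) (A \<union> ?U)"
          by (rule fl_mult_one[OF fA fU v])
        moreover have "(\<Sum>B\<in>set (ps @ [A]). w B) = w A + (\<Sum>B\<in>set ps. w B)"
          unfolding sp using An by simp
        moreover have "card (A \<union> ?U) = 1 + (\<Sum>B\<in>set (ps @ [A]). card B - 1)"
        proof -
          have "card (A \<union> ?U) + card (A \<inter> ?U) = card A + card ?U" using card_Un_Int[OF fA fU] by simp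
          moreover have "(\<Sum>B\<in>set (ps @ [A]). card B - 1) = (card A - 1) + (\<Sum>B\<in>set ps. card B - 1)"
            unfolding sp using An by simp
          ultimately show ?thesis using True IH2 cA by simp
        qed
        ultimately show ?thesis using pr IH1 gs gd True un by simp
      next
        case False
        have fI: "finite (A \<inter> ?U)" using fA by simp
        obtain x y where xy: "x \<in> A \<inter> ?U" "y \<in> A \<inter> ?U" "x \<noteq> y"
          using two_elems[OF fI ne False] by blast
        have "fl (w A) A * fl (\<Sum>B\<in>set ps. w B) ?U = 0"
          by (rule fl_mult_two[OF fA fU xy])
        then show ?thesis using pr IH1 gs False by simp
      qed
    next
      case False
      then show ?thesis using pr IH gs by simp
    qed
  qed
qed

lemma f0_single: "f0 {v} = 1"
  unfolding f0_def T_def by simp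

theorem main_ring:
  assumes hg: "hypergraph V Es" and con: "hg_connected V Es" and V: "V \<noteq> {}"
  shows "(\<Prod>A\<in>Es. fl (w A) A) = (if hypertree V Es then fl (\<Sum>A\<in>Es. w A) V else 0) \<and>
         (hypertree V Es \<longrightarrow> card V = 1 + (\<Sum>A\<in>Es. card A - 1))"
proof (cases "Es = {}")
  case True
  obtain v where v: "V = {v}" using V_single[OF con[unfolded True] V] by blast
  have "\<not> hg_cycle Es vs es" for vs es
  proof
    assume "hg_cycle Es vs es"
    then have w: "hg_walk Es vs es" "2 \<le> length es" unfolding hg_cycle_def by auto
    have "set es \<subseteq> {}" using walk_edges[OF w(1)] True by simp
    then have "es = []" by simp
    then show False using w(2) by simp
  qed
  then have ht: "hypertree V Es" using con unfolding hypertree_def by blast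
  show ?thesis using ht True v by (simp add: fl_def f0_single T_def)
next
  case False
  obtain os where os: "conn_ord os" "set os = Es" using ord_exists[OF hg con False] by blast
  have ne: "os \<noteq> []" using os False by auto
  have fin: "\<forall>A\<in>set os. finite A \<and> 2 \<le> card A"
  proof
    fix A assume "A \<in> set os"
    then have "2 \<le> card A" using hg os unfolding hypergraph_def by auto
    then show "finite A \<and> 2 \<le> card A" using card.infinite by fastforce
  qed
  have UV: "\<Union>(set os) = V" using V_union[OF hg con False] os by simp
  have ht: "hypertree V Es \<longleftrightarrow> good os"
  proof
    assume "hypertree V Es"
    then have nc: "\<not> (\<exists>vs es. hg_cycle Es vs es)" unfolding hypertree_def by simp
    show "good os"
    proof (rule ccontr)
      assume "\<not> good os"
      then show False using bad_cycle[OF os(1) _ os(2) hg] nc by blast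
    qed
  next
    assume g: "good os"
    have "\<not> hg_cycle Es vs es" for vs es using good_nocycle[OF os(1) g os(2) hg] by blast
    then show "hypertree V Es" using con unfolding hypertree_def by blast
  qed
  show ?thesis using ord_prod[OF os(1) ne fin, of w] ht os(2) UV by simp
qed

end


interpretation EV: Erules "EE :: 'v::linorder \<Rightarrow> 'v \<Rightarrow> ('v \<times> bool) eva"
  by unfold_locales (rule R1, rule R2, rule R3)

definition to :: "('g::linorder) eva \<Rightarrow> 'g grass" where "to x = Rep_ga (Rep_eva x)"

lemma to_inj: "to x = to y \<Longrightarrow> x = y"
  unfolding to_def by (simp add: Rep_ga_inject Rep_eva_inject)

lemma to_mult: "to (x * y) = gmul (to x) (to y)"
  unfolding to_def by (simp add: times_eva.rep_eq times_ga.rep_eq)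
lemma to_add: "to (x + y) = gadd (to x) (to y)"
  unfolding to_def by (simp add: plus_eva.rep_eq plus_ga.rep_eq)
lemma to_diff: "to (x - y) = gdiff (to x) (to y)"
  unfolding to_def by (simp add: minus_eva.rep_eq minus_ga.rep_eq)
lemma to_zero: "to 0 = gzero"
  unfolding to_def by (simp add: zero_eva.rep_eq zero_ga.rep_eq)
lemma to_one: "to 1 = gone"
  unfolding to_def by (simp add: one_eva.rep_eq one_ga.rep_eq)

lemma to_sum: "to (sum f I) = gsum (\<lambda>i. to (f i)) I"
proof (cases "finite I")
  case True
  then show ?thesis
  proof (induction I rule: finite_induct)
    case empty then show ?case by (simp add: to_zero gsum_def gzero_def)
    next
    case (insert x F)
    then show ?case by (simp add: to_add gsum_def gadd_def fun_eq_iff)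
  qed
next
  case False
  then show ?thesis by (simp add: to_zero gsum_def gzero_def fun_eq_iff)
qed

lemma to_prod_list: "gprod_list (map (\<lambda>a. to (F a)) xs) = to (prod_list (map F xs))"
  by (induction xs) (simp_all add: gprod_list_def to_one to_mult)

lemma to_EE: "to (EE i j) = gmul (psibar i) (psi j)"
  unfolding to_def EE_rep by (simp add: times_ga.rep_eq pbg_def psg_def Gg.rep_eq psibar_def psi_def)

lemma tau_to: "tau A = to (EV.T A)"
proof -
  have "tau A = gprod_list (map (\<lambda>i. to (EE i i)) (sorted_list_of_set A))"
    unfolding tau_def by (simp add: to_EE)
  also have "\<dots> = to (prod_list (map (\<lambda>i. EE i i) (sorted_list_of_set A)))" by (rule to_prod_list)
  also have "prod_list (map (\<lambda>i. EE i i) (sorted_list_of_set A)) = EV.T A"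
  proof (cases "finite A")
    case True
    then show ?thesis unfolding EV.T_def
      using prod.distinct_set_conv_list[of "sorted_list_of_set A" "\<lambda>i. EE i i"] by simp
  next
    case False
    then show ?thesis unfolding EV.T_def by simp
  qed
  finally show ?thesis .
qed

lift_definition cstg :: "complex \<Rightarrow> ('g::linorder) ga" is "\<lambda>c S. if S = {} then c else 0" by auto

lemma par_cstg: "par 0 (Rep_ga (cstg c))" by (simp add: par_def cstg.rep_eq)

definition cst :: "complex \<Rightarrow> ('g::linorder) eva" where "cst c = Abs_eva (cstg c)"

lemma cst_rep: "Rep_eva (cst c) = cstg c"
  unfolding cst_def by (rule Abs_eva_inverse) (simp add: par_cstg)

lemma to_cst: "to (cst c) = (\<lambda>S. if S = {} then c else 0)"
  unfolding to_def by (simp add: cst_rep cstg.rep_eq)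

lemma gmul_cst_fin:
  assumes "finite S"
  shows "gmul (\<lambda>S. if S = {} then c else 0) a S = c * a S"
proof -
  have "gmul (\<lambda>S. if S = {} then c else 0) a S = (\<Sum>T\<in>Pow S. (-1) ^ inv_count T (S - T) * (if T = {} then c else 0) * a (S - T))"
    using assms by (simp add: gmul_def)
  also have "\<dots> = (\<Sum>T\<in>Pow S. if T = {} then c * a S else 0)"
    by (rule sum.cong) auto
  also have "\<dots> = c * a S" by (subst sum.delta) (use assms in auto)
  finally show ?thesis .
qed

lemma to_cst_mult: "to (cst c * x) = gscal c (to x)"
proof -
  have inf: "infinite S \<Longrightarrow> to x S = 0" for S unfolding to_def using Rep_ga[of "Rep_eva x"] by auto
  show ?thesis
  proof
    fix S
    show "to (cst c * x) S = gscal c (to x) S"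
    proof (cases "finite S")
      case True
      then show ?thesis unfolding to_mult gscal_def
        by (simp add: to_def cst_rep cstg.rep_eq gmul_cst_fin)
    next
      case False
      then show ?thesis unfolding to_mult gscal_def by (simp add: gmul_inf inf)
    qed
  qed
qed

lemma cst_one: "cst 1 = 1"
  by (rule to_inj) (simp add: to_cst to_one gone_def)

lemma cst_add: "cst (a + b) = cst a + cst b"
  by (rule to_inj) (simp add: to_cst to_add gadd_def fun_eq_iff)

lemma cst_zero: "cst 0 = 0"
  by (rule to_inj) (simp add: to_cst to_zero gzero_def fun_eq_iff)

lemma cst_minus: "cst (- a) = - cst a"
proof -
  have "cst a + cst (- a) = cst (a + - a)" by (rule cst_add[symmetric])
  also have "\<dots> = cst 0" by simp
  also have "\<dots> = 0" by (rule cst_zero)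
  finally have h: "cst a + cst (- a) = 0" .
  show ?thesis by (subst eq_neg_iff_add_eq_0) (simp add: h add.commute)
qed

lemma cst_sum: "cst (sum f I) = (\<Sum>i\<in>I. cst (f i))"
proof (cases "finite I")
  case True
  then show ?thesis by (induction I rule: finite_induct) (simp_all add: cst_zero cst_add)
next
  case False
  then show ?thesis by (simp add: cst_zero)
qed


lemma fA_to:
  assumes fin: "finite A"
  shows "fA lam A = to (EV.fl (cst (lam * (of_nat (card A) - 1))) A)"
proof -
  let ?D = "{(i, j). i \<in> A \<and> j \<in> A \<and> i \<noteq> j}"
  let ?c = "lam * (1 - of_nat (card A))"
  have g1: "gscal ?c (tau A) = to (cst ?c * EV.T A)" by (simp add: to_cst_mult tau_to)
  have g2: "gsum (\<lambda>i. tau (A - {i})) A = to (\<Sum>i\<in>A. EV.T (A - {i}))" by (simp add: to_sum tau_to)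
  have g3: "gsum (\<lambda>(i, j). gmul (gmul (psibar i) (psi j)) (tau (A - {i, j}))) ?D =
            to (\<Sum>p\<in>?D. EE (fst p) (snd p) * EV.T (A - {fst p, snd p}))"
    by (simp add: to_sum tau_to to_mult to_EE split_def)
  have Dsig: "?D = Sigma A (\<lambda>i. A - {i})" by auto
  have s2: "(\<Sum>p\<in>?D. EE (fst p) (snd p) * EV.T (A - {fst p, snd p})) =
            (\<Sum>i\<in>A. \<Sum>j\<in>A - {i}. EE i j * EV.T (A - {i} - {j}))"
  proof -
    have "(\<Sum>i\<in>A. \<Sum>j\<in>A - {i}. EE i j * EV.T (A - {i} - {j})) =
          (\<Sum>(i, j)\<in>Sigma A (\<lambda>i. A - {i}). EE i j * EV.T (A - {i} - {j}))"
      by (rule sum.Sigma) (use fin in auto)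
    also have "\<dots> = (\<Sum>p\<in>?D. EE (fst p) (snd p) * EV.T (A - {fst p, snd p}))"
      unfolding Dsig by (rule sum.cong) (auto simp: split_def Diff_insert2[symmetric] insert_commute)
    finally show ?thesis by simp
  qed
  have cc: "cst ?c = - cst (lam * (of_nat (card A) - 1))"
    by (simp add: cst_minus[symmetric] algebra_simps)
  have "fA lam A = to (cst ?c * EV.T A + (\<Sum>i\<in>A. EV.T (A - {i})) -
                      (\<Sum>p\<in>?D. EE (fst p) (snd p) * EV.T (A - {fst p, snd p})))"
    unfolding fA_def g1 g2 g3 by (simp add: to_add to_diff)
  also have "cst ?c * EV.T A + (\<Sum>i\<in>A. EV.T (A - {i})) -
                      (\<Sum>p\<in>?D. EE (fst p) (snd p) * EV.T (A - {fst p, snd p})) =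
             EV.fl (cst (lam * (of_nat (card A) - 1))) A"
    unfolding EV.fl_def EV.f0_def s2 cc by (simp add: algebra_simps)
  finally show ?thesis .
qed

theorem corollary4p3:
  fixes V :: "'v::linorder set" and E :: "'v set set"
  assumes "hypergraph V E" and "hg_connected V E" and "V \<noteq> {}"
  shows "(\<forall>(lam::complex) es. distinct es \<and> set es = E \<longrightarrow>
            gprod_list (map (fA lam) es) = (if hypertree V E then fA lam V else gzero))
       \<and> (\<forall>(lamA :: 'v set \<Rightarrow> complex) es. distinct es \<and> set es = E \<longrightarrow>
            gprod_list (map (\<lambda>A. fA (lamA A) A) es) =
              (if hypertree V E then fA (lambda_star E lamA) V else gzero))"
proof -
  note hg = assms(1) and con = assms(2) and Vne = assms(3)
  have fV: "finite V" using hg unfolding hypergraph_def by simp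
  have hgF: "\<And>A. A \<in> E \<Longrightarrow> finite A \<and> 2 \<le> card A"
  proof -
    fix A assume "A \<in> E"
    then have "2 \<le> card A" using hg unfolding hypergraph_def by auto
    then show "finite A \<and> 2 \<le> card A" using card.infinite by fastforce
  qed
  have fE: "finite E" by (rule finite_E[OF hg])
  have cA1: "(of_nat (card A - 1)::complex) = of_nat (card A) - 1" if "A \<in> E" for A
  proof -
    have "1 \<le> card A" using hgF[OF that] by simp
    then show ?thesis by (simp add: of_nat_diff)
  qed
  define N where "N lamA = (\<Sum>A\<in>E. (of_nat (card A) - 1) * lamA A)" for lamA :: "'v set \<Rightarrow> complex"
  define D where "D = (\<Sum>A\<in>E. of_nat (card A) - (1::complex))"
  have gen: "gprod_list (map (\<lambda>A. fA (lamA A) A) es) =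
      (if hypertree V E then to (EV.fl (cst (N lamA)) V) else gzero)"
    if es: "distinct es" "set es = E" for lamA :: "'v set \<Rightarrow> complex" and es
  proof -
    define w :: "'v set \<Rightarrow> ('v \<times> bool) eva" where "w A = cst (lamA A * (of_nat (card A) - 1))" for A
    have m: "map (\<lambda>A. fA (lamA A) A) es = map (\<lambda>A. to (EV.fl (w A) A)) es"
      using es hgF by (auto simp: w_def fA_to)
    have "gprod_list (map (\<lambda>A. fA (lamA A) A) es) = gprod_list (map (\<lambda>A. to (EV.fl (w A) A)) es)"
      by (simp only: m)
    also have "\<dots> = to (prod_list (map (\<lambda>A. EV.fl (w A) A) es))"
      by (rule to_prod_list)
    also have "prod_list (map (\<lambda>A. EV.fl (w A) A) es) = (\<Prod>A\<in>E. EV.fl (w A) A)"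
      using prod.distinct_set_conv_list[OF es(1), of "\<lambda>A. EV.fl (w A) A"] es(2) by simp
    also have "\<dots> = (if hypertree V E then EV.fl (\<Sum>A\<in>E. w A) V else 0)"
      using EV.main_ring[OF hg con Vne, of w] by simp
    also have "(\<Sum>A\<in>E. w A) = cst (N lamA)"
      unfolding w_def N_def cst_sum by (simp add: mult.commute)
    finally show ?thesis by (simp add: to_zero)
  qed
  have cardV: "hypertree V E \<Longrightarrow> of_nat (card V) - 1 = D"
  proof -
    assume ht: "hypertree V E"
    have "card V = 1 + (\<Sum>A\<in>E. card A - 1)"
      using EV.main_ring[OF hg con Vne, of "\<lambda>_. 0"] ht by simp
    then have "(of_nat (card V) :: complex) - 1 = of_nat (\<Sum>A\<in>E. card A - 1)" by simp
    also have "\<dots> = D" unfolding D_def of_nat_sum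
      by (rule sum.cong[OF refl]) (simp only: cA1)
    finally show ?thesis .
  qed
  have fAV: "hypertree V E \<Longrightarrow> fA x V = to (EV.fl (cst (x * D)) V)" for x
    using fA_to[OF fV, of x] cardV by simp
  have D0: "D = 0 \<Longrightarrow> E = {}"
  proof -
    assume D0: "D = 0"
    have Deq: "D = of_nat (\<Sum>A\<in>E. card A - 1)" unfolding D_def of_nat_sum
      by (rule sum.cong[OF refl]) (simp only: cA1)
    have "(of_nat (\<Sum>A\<in>E. card A - 1) :: complex) = 0" by (simp only: Deq[symmetric] D0)
    then have "(\<Sum>A\<in>E. card A - 1) = 0" by (simp only: of_nat_eq_0_iff)
    then have "\<forall>A\<in>E. card A - 1 = 0" using fE by simp
    then show "E = {}" using hgF by fastforce
  qed
  have part2: "lambda_star E lamA * D = N lamA" for lamA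
  proof (cases "D = 0")
    case True
    then have "E = {}" by (rule D0)
    then show ?thesis using True by (simp add: N_def lambda_star_def)
  next
    case False
    then show ?thesis unfolding lambda_star_def N_def D_def by simp
  qed
  have part1: "lam * D = N (\<lambda>_. lam)" for lam
    unfolding D_def N_def by (simp add: sum_distrib_left mult.commute)
  show ?thesis
  proof (intro conjI allI impI)
    fix lam :: complex and es assume es: "distinct es \<and> set es = E"
    have "gprod_list (map (fA lam) es) = (if hypertree V E then to (EV.fl (cst (N (\<lambda>_. lam))) V) else gzero)"
      using gen[of es "\<lambda>_. lam"] es by simp
    also have "\<dots> = (if hypertree V E then fA lam V else gzero)"
      using fAV[of lam] part1[of lam] by simp
    finally show "gprod_list (map (fA lam) es) = (if hypertree V E then fA lam V else gzero)" .
  next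
    fix lamA :: "'v set \<Rightarrow> complex" and es assume es: "distinct es \<and> set es = E"
    have "gprod_list (map (\<lambda>A. fA (lamA A) A) es) = (if hypertree V E then to (EV.fl (cst (N lamA)) V) else gzero)"
      using gen es by blast
    also have "\<dots> = (if hypertree V E then fA (lambda_star E lamA) V else gzero)"
      using fAV[of "lambda_star E lamA"] part2[of lamA] by simp
    finally show "gprod_list (map (\<lambda>A. fA (lamA A) A) es) =
              (if hypertree V E then fA (lambda_star E lamA) V else gzero)" .
  qed
qed

end
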